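(* Let $G$ be a tree. Then for every $n\ge 1$, $\mathrm{Sz}(\Gamma^G_n)=2\,W(\Gamma^G_n)$.
   Context: Let $G=(V,E)$ be a finite tree with vertex set $V$ of size $k$, and fix an orientation of each edge, so that each edge becomes an ordered pair $e=(s,t)$. Each oriented edge $e=(s,t)$ acts on the set $V^*$ of finite words over the alphabet $V$ by the recursive rule: $e(\emptyset)=\emptyset$, $e(sw)=t\,e(w)$, $e(tw)=sw$, and $e(xw)=xw$ for $x\in V\setminus\{s,t\}$ (words are read left to right, $w\in V^*$). This action preserves word length. For $n\ge 1$, the Schreier graph $\Gamma_n^G$ is the multigraph with vertex set $V^n$ having, for each $u\in V^n$ and each oriented edge $e$ of $G$, one edge joining $u$ and $e(u)$, labelled $e$ (a loop if $e(u)=u$). For a connected graph $H$, the Wiener index is $W(H)=\sum_{\{u,v\}}d_H(u,v)$ over unordered pairs of vertices. For vertices $u,v$, $n(u,v)$ is the number of vertices of $H$ strictly closer to $u$ than to $v$. The Szeged index is $\mathrm{Sz}(H)=\sum_{\{u,v\}}n(u,v)\,n(v,u)$, the sum over all non-loop edges $\{u,v\}$ of $H$, parallel edges counted with multiplicity (loops contribute nothing). *)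

theory Defs
  imports Complex_Main
begin

definition und :: "('v \<times> 'v) set \<Rightarrow> ('v \<times> 'v) set" where
  "und E = {(x, y). (x, y) \<in> E \<or> (y, x) \<in> E}"

(* A finite tree with vertex set V, each edge oriented exactly one way:
   connected, and acyclic in the sense that every edge is a bridge
   (removing it disconnects its endpoints). *)
definition oriented_tree :: "'v set \<Rightarrow> ('v \<times> 'v) set \<Rightarrow> bool" where
  "oriented_tree V E \<longleftrightarrow>
     finite V \<and> V \<noteq> {} \<and> E \<subseteq> V \<times> V \<and>
     (\<forall>(s, t) \<in> E. s \<noteq> t \<and> (t, s) \<notin> E) \<and>
     (\<forall>x \<in> V. \<forall>y \<in> V. (x, y) \<in> (und E)\<^sup>*) \<and>
     (\<forall>(s, t) \<in> E. (s, t) \<notin> (und (E - {(s, t)}))\<^sup>*)"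

fun act :: "'v \<times> 'v \<Rightarrow> 'v list \<Rightarrow> 'v list" where
  "act e [] = []"
| "act (s, t) (x # w) =
     (if x = s then t # act (s, t) w
      else if x = t then s # w
      else x # w)"

definition words :: "'v set \<Rightarrow> nat \<Rightarrow> 'v list set" where
  "words V n = {w. length w = n \<and> set w \<subseteq> V}"

(* Adjacency relation of the Schreier graph Gamma_n (ignoring multiplicities). *)
definition sch_adj :: "'v set \<Rightarrow> ('v \<times> 'v) set \<Rightarrow> nat \<Rightarrow> ('v list \<times> 'v list) set" where
  "sch_adj V E n = {(u, v). u \<in> words V n \<and> v \<in> words V n \<and>
                      (\<exists>e \<in> E. v = act e u \<or> u = act e v)}"

definition sch_dist :: "'v set \<Rightarrow> ('v \<times> 'v) set \<Rightarrow> nat \<Rightarrow> 'v list \<Rightarrow> 'v list \<Rightarrow> nat" where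
  "sch_dist V E n u v = (LEAST k. (u, v) \<in> (sch_adj V E n) ^^ k)"

(* Wiener index: sum of distances over unordered pairs of distinct vertices,
   computed as half the sum over ordered pairs (distance is symmetric, d(u,u)=0). *)
definition wiener :: "'v set \<Rightarrow> ('v \<times> 'v) set \<Rightarrow> nat \<Rightarrow> real" where
  "wiener V E n = (\<Sum>u \<in> words V n. \<Sum>v \<in> words V n. real (sch_dist V E n u v)) / 2"

definition n_closer :: "'v set \<Rightarrow> ('v \<times> 'v) set \<Rightarrow> nat \<Rightarrow> 'v list \<Rightarrow> 'v list \<Rightarrow> nat" where
  "n_closer V E n u v = card {w \<in> words V n. sch_dist V E n w u < sch_dist V E n w v}"

(* Szeged index: sum over the non-loop edges of the multigraph Gamma_n; the edges
   are indexed by pairs (u, e) with u in V^n, e in E, joining u and e(u). *)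
definition szeged :: "'v set \<Rightarrow> ('v \<times> 'v) set \<Rightarrow> nat \<Rightarrow> real" where
  "szeged V E n = (\<Sum>(u, e) \<in> {(u, e). u \<in> words V n \<and> e \<in> E \<and> act e u \<noteq> u}.
                      real (n_closer V E n u (act e u) * n_closer V E n (act e u) u))"

end

theory Submission
  imports Defs
begin


definition good :: "'v \<times> 'v \<Rightarrow> 'v \<Rightarrow> bool" where
  "good e x \<longleftrightarrow> x = fst e \<or> x = snd e"

fun pb :: "('v \<Rightarrow> bool) \<Rightarrow> ('v \<Rightarrow> 'v) \<Rightarrow> 'v list \<Rightarrow> 'v list" where
  "pb g sd [] = []"
| "pb g sd (a # p) = (if list_all g p then sd a else hd (pb g sd p)) # pb g sd p"

lemma pb_length[simp]: "length (pb g sd p) = length p"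
  by (induction p) auto

lemma pb_id: "(\<And>x. g x \<Longrightarrow> sd x = x) \<Longrightarrow> list_all g p \<Longrightarrow> pb g sd p = p"
  by (induction p) auto

lemma pb_good: "(\<And>x. g (sd x)) \<Longrightarrow> list_all g (pb g sd p)"
proof (induction p)
  case (Cons a p)
  then show ?case by (cases p) (auto simp: list_all_iff)
qed simp

lemma pb_replicate: "(\<And>x. g x \<Longrightarrow> sd x = x) \<Longrightarrow> (\<And>x. g (sd x)) \<Longrightarrow>
   pb g sd (replicate j a) = replicate j (sd a)"
proof (induction j)
  case (Suc j)
  then show ?case by (cases j) (auto simp: list_all_iff)
qed simp

lemma pb_append: "list_all g q \<Longrightarrow> (\<And>x. g x \<Longrightarrow> sd x = x) \<Longrightarrow> pb g sd (p @ q) = pb g sd p @ q"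
proof (induction p)
  case Nil then show ?case by (simp add: pb_id)
next
  case (Cons a p)
  then show ?case by (cases p) auto
qed

lemma pb_last: "p \<noteq> [] \<Longrightarrow> (\<And>x. g x \<Longrightarrow> sd x = x) \<Longrightarrow>
  (if g (last p) then last (pb g sd p) = last p else pb g sd p = replicate (length p) (sd (last p)))"
proof (induction p)
  case Nil then show ?case by simp
next
  case (Cons a p)
  show ?case
  proof (cases "p = []")
    case True then show ?thesis using Cons by auto
  next
    case False
    have nl: "\<not> list_all g p" if "\<not> g (last p)" using that False by (metis last_in_set list_all_iff)
    show ?thesis using Cons.IH[OF False Cons.prems(2)] False nl
      by (cases p) (auto split: if_splits)
  qed
qed


lemma act_length[simp]: "length (act e w) = length w"
  by (induction e w rule: act.induct) auto

lemma act_set: "set w \<subseteq> V \<Longrightarrow> fst e \<in> V \<Longrightarrow> snd e \<in> V \<Longrightarrow> set (act e w) \<subseteq> V"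
  by (induction e w rule: act.induct) auto

lemma act_append: "act (s, t) (p @ q) = act (s, t) p @ (if list_all (\<lambda>x. x = s) p then act (s, t) q else q)"
  by (induction p) auto

lemma act_replicate: "act (s, t) (replicate j s) = replicate j t"
  by (induction j) auto

lemma act_ne: "act (s, t) q \<noteq> q \<Longrightarrow> q \<noteq> [] \<and> (hd q = s \<or> hd q = t) \<and> (hd (act (s, t) q) = s \<or> hd (act (s, t) q) = t)"
  by (cases q) (auto split: if_splits)

lemma act_hd: "q \<noteq> [] \<Longrightarrow> hd q \<noteq> s \<Longrightarrow> hd q \<noteq> t \<Longrightarrow> act (s, t) q = q"
  by (cases q) auto

fun val :: "'v \<times> 'v \<Rightarrow> 'v list \<Rightarrow> nat" where
  "val e [] = 0"
| "val e (a # p) = (if a = fst e then 1 else 0) + 2 * val e p"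

fun enc :: "'v \<times> 'v \<Rightarrow> nat \<Rightarrow> nat \<Rightarrow> 'v list" where
  "enc e 0 r = []"
| "enc e (Suc j) r = (if odd r then fst e else snd e) # enc e j (r div 2)"

lemma enc_length[simp]: "length (enc e j r) = j"
  by (induction j arbitrary: r) auto

lemma enc_good: "list_all (good e) (enc e j r)"
  by (induction j arbitrary: r) (auto simp: good_def)

lemma enc_set: "set (enc e j r) \<subseteq> {fst e, snd e}"
  by (induction j arbitrary: r) auto

lemma val_less: "val e p < 2 ^ length p"
  by (induction p) auto

lemma val_enc: "fst e \<noteq> snd e \<Longrightarrow> r < 2 ^ j \<Longrightarrow> val e (enc e j r) = r"
proof (induction j arbitrary: r)
  case 0 then show ?case by simp
next
  case (Suc j)
  have "r div 2 < 2 ^ j" using Suc.prems by auto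
  then show ?case using Suc by auto
qed

lemma enc_val: "list_all (good e) p \<Longrightarrow> enc e (length p) (val e p) = p"
  by (induction p) (auto simp: good_def)

lemma val_inj: "list_all (good e) p \<Longrightarrow> list_all (good e) p' \<Longrightarrow> length p = length p' \<Longrightarrow>
   val e p = val e p' \<Longrightarrow> p = p'"
  by (metis enc_val)

lemma act_enc:
  assumes "s \<noteq> t" "r < 2 ^ j" "z = [] \<or> (hd z \<noteq> s \<and> hd z \<noteq> t)"
  shows "act (s, t) (enc (s, t) j r @ z) = enc (s, t) j (Suc r mod 2 ^ j) @ z"
  using assms(2)
proof (induction j arbitrary: r)
  case 0
  then show ?case using assms by (cases z) auto
next
  case (Suc j)
  show ?case
  proof (cases "odd r")
    case True
    have r2: "r div 2 < 2 ^ j" using Suc.prems by auto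
    have "Suc r mod 2 ^ Suc j = 2 * (Suc (r div 2) mod 2 ^ j)"
    proof -
      have "Suc r = 2 * Suc (r div 2)" using True by presburger
      then show ?thesis by (simp add: mult_mod_right)
    qed
    then show ?thesis using True Suc.IH[OF r2] assms(1) by simp
  next
    case False
    have "Suc r < 2 ^ Suc j"
    proof -
      have "Suc r \<noteq> 2 ^ Suc j"
      proof
        assume "Suc r = 2 ^ Suc j"
        then have "even (Suc r)" by simp
        with False show False by simp
      qed
      then show ?thesis using Suc.prems by linarith
    qed
    then have "Suc r mod 2 ^ Suc j = Suc r" by simp
    moreover have "Suc r div 2 = r div 2" using False by presburger
    ultimately show ?thesis using False assms(1) by simp
  qed
qed


lemma und_sym: "(x, y) \<in> und X \<Longrightarrow> (y, x) \<in> und X"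
  by (auto simp: und_def)

lemma und_rtrancl_sym: "(x, y) \<in> (und X)\<^sup>* \<Longrightarrow> (y, x) \<in> (und X)\<^sup>*"
proof (induction rule: rtrancl_induct)
  case base then show ?case by simp
next
  case (step y z)
  have "(z, y) \<in> und X" using step(2) by (rule und_sym)
  then show ?case using step(3) by (rule converse_rtrancl_into_rtrancl)
qed

locale otree =
  fixes V :: "'v set" and E :: "('v \<times> 'v) set"
  assumes tree: "oriented_tree V E"
begin

lemma finV: "finite V" using tree by (simp add: oriented_tree_def)
lemma EV: "E \<subseteq> V \<times> V" using tree by (simp add: oriented_tree_def)
lemma finE: "finite E" using EV finV finite_SigmaI finite_subset by blast
lemma E_ne: assumes "e \<in> E" shows "fst e \<noteq> snd e"
proof -
  have h: "\<forall>(s, t) \<in> E. s \<noteq> t \<and> (t, s) \<notin> E" using tree by (simp add: oriented_tree_def)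
  obtain s t where e: "e = (s, t)" by (cases e)
  have "(s, t) \<in> E" using assms e by simp
  from bspec[OF h this] show ?thesis unfolding e by simp
qed
lemma E_fst: "e \<in> E \<Longrightarrow> fst e \<in> V" using EV by auto
lemma E_snd: "e \<in> E \<Longrightarrow> snd e \<in> V" using EV by auto
lemma bridge: assumes "e \<in> E" shows "(fst e, snd e) \<notin> (und (E - {e}))\<^sup>*"
proof -
  have h: "\<forall>(s, t) \<in> E. (s, t) \<notin> (und (E - {(s, t)}))\<^sup>*" using tree by (simp add: oriented_tree_def)
  obtain s t where e: "e = (s, t)" by (cases e)
  have "(s, t) \<in> E" using assms e by simp
  from bspec[OF h this] show ?thesis unfolding e by simp
qed
lemma conn: "x \<in> V \<Longrightarrow> y \<in> V \<Longrightarrow> (x, y) \<in> (und E)\<^sup>*"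
  using tree by (simp add: oriented_tree_def)

definition side :: "'v \<times> 'v \<Rightarrow> 'v \<Rightarrow> 'v" where
  "side e y = (if (y, fst e) \<in> (und (E - {e}))\<^sup>* then fst e else snd e)"

lemma side_good: "good e (side e y)"
  by (simp add: side_def good_def)

lemma side_id: assumes "e \<in> E" "good e x" shows "side e x = x"
proof (cases "x = fst e")
  case True then show ?thesis by (simp add: side_def)
next
  case False then have x: "x = snd e" using assms(2) by (simp add: good_def)
  have "(snd e, fst e) \<notin> (und (E - {e}))\<^sup>*"
  proof
    assume "(snd e, fst e) \<in> (und (E - {e}))\<^sup>*"
    then have "(fst e, snd e) \<in> (und (E - {e}))\<^sup>*" by (rule und_rtrancl_sym)
    with bridge[OF assms(1)] show False by simp
  qed
  then show ?thesis using x False by (simp add: side_def)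
qed

lemma side_adj:
  assumes "g \<in> E" "e \<in> E" "g \<noteq> e"
  shows "side e (fst g) = side e (snd g)"
proof -
  have "(fst g, snd g) \<in> und (E - {e})" using assms by (cases g) (auto simp: und_def)
  then have a: "(fst g, snd g) \<in> (und (E - {e}))\<^sup>*" and b: "(snd g, fst g) \<in> (und (E - {e}))\<^sup>*"
    by (blast, blast intro: und_sym)
  have "(fst g, fst e) \<in> (und (E - {e}))\<^sup>* \<longleftrightarrow> (snd g, fst e) \<in> (und (E - {e}))\<^sup>*"
  proof
    assume "(fst g, fst e) \<in> (und (E - {e}))\<^sup>*"
    with b show "(snd g, fst e) \<in> (und (E - {e}))\<^sup>*" by (rule rtrancl_trans)
  next
    assume "(snd g, fst e) \<in> (und (E - {e}))\<^sup>*"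
    with a show "(fst g, fst e) \<in> (und (E - {e}))\<^sup>*" by (rule rtrancl_trans)
  qed
  then show ?thesis by (simp add: side_def)
qed

lemma first_edge_aux:
  assumes "(a, b) \<in> (und E)\<^sup>*" "b \<noteq> a"
  shows "\<exists>f c. f \<in> E \<and> (f = (a, c) \<or> f = (c, a)) \<and> (c, b) \<in> (und (E - {f}))\<^sup>*"
  using assms
proof (induction rule: rtrancl_induct)
  case base then show ?case by simp
next
  case (step y b)
  show ?case
  proof (cases "y = a")
    case True
    then have "(a, b) \<in> E \<or> (b, a) \<in> E" using step by (auto simp: und_def)
    then show ?thesis by blast
  next
    case False
    then obtain f c where f: "f \<in> E" "f = (a, c) \<or> f = (c, a)" "(c, y) \<in> (und (E - {f}))\<^sup>*"
      using step.IH by blast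
    have yb: "(y, b) \<in> E \<or> (b, y) \<in> E" using step by (auto simp: und_def)
    have "(y, b) \<in> und (E - {f})"
    proof -
      have "(y, b) \<noteq> f" "(b, y) \<noteq> f" using f(2) False step.prems by auto
      then show ?thesis using yb by (auto simp: und_def)
    qed
    then have "(c, b) \<in> (und (E - {f}))\<^sup>*" using f(3) by (rule rtrancl_into_rtrancl[rotated])
    then show ?thesis using f(1,2) by blast
  qed
qed

lemma first_edge:
  assumes "a \<in> V" "b \<in> V" "a \<noteq> b"
  shows "\<exists>f c. f \<in> E \<and> (f = (a, c) \<or> f = (c, a)) \<and> side f b = c"
proof -
  have ba: "b \<noteq> a" using assms(3) by simp
  obtain f c where f: "f \<in> E" "f = (a, c) \<or> f = (c, a)" "(c, b) \<in> (und (E - {f}))\<^sup>*"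
    using first_edge_aux[OF conn[OF assms(1,2)] ba] by blast
  have "side f b = c"
  proof (cases "f = (a, c)")
    case True
    have "(b, a) \<notin> (und (E - {f}))\<^sup>*"
    proof
      assume "(b, a) \<in> (und (E - {f}))\<^sup>*"
      with f(3) have "(c, a) \<in> (und (E - {f}))\<^sup>*" by (rule rtrancl_trans)
      then have "(a, c) \<in> (und (E - {f}))\<^sup>*" by (rule und_rtrancl_sym)
      then show False using bridge[OF f(1)] True by simp
    qed
    then show ?thesis using True by (simp add: side_def)
  next
    case False
    then have "f = (c, a)" using f(2) by blast
    moreover have "(b, c) \<in> (und (E - {f}))\<^sup>*" using f(3) by (rule und_rtrancl_sym)
    ultimately show ?thesis by (simp add: side_def)
  qed
  then show ?thesis using f(1,2) by blast
qed

end


lemma act_good_e: "list_all (good (s, t)) (act (s, t) p) = list_all (good (s, t)) p"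
  by (induction p) (auto simp: good_def)

lemma takeWhile_cyc: "list_all P p \<Longrightarrow> (z = [] \<or> \<not> P (hd z)) \<Longrightarrow> takeWhile P (p @ z) = p"
  by (induction p) (cases z; auto)+

context otree
begin

lemma pb_act:
  assumes e: "e \<in> E" and g: "(s', t') \<in> E"
    and exc: "\<not> ((s', t') = e \<and> list_all (good e) p)"
  shows "pb (good e) (side e) (act (s', t') p) = pb (good e) (side e) p"
  using exc
proof (induction p)
  case Nil then show ?case by simp
next
  case (Cons a p)
  have st: "s' \<noteq> t'" using E_ne[OF g] by simp
  have sid: "\<And>x. good e x \<Longrightarrow> side e x = x" using side_id[OF e] by blast
  have sadj: "(s', t') \<noteq> e \<Longrightarrow> side e s' = side e t'" using side_adj[OF g e] by simp
  have ge: "(s', t') = e \<Longrightarrow> list_all (good e) (act (s', t') p) = list_all (good e) p"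
    using act_good_e[of s' t' p] by simp
  show ?case
  proof (cases "a = s'")
    case True
    have ne: "\<not> ((s', t') = e \<and> list_all (good e) p)"
      using Cons.prems True by (cases "(s', t') = e") (auto simp: good_def list_all_iff)
    have IH: "pb (good e) (side e) (act (s', t') p) = pb (good e) (side e) p" using Cons.IH[OF ne] .
    have hd_eq: "(if list_all (good e) (act (s', t') p) then side e t' else hd (pb (good e) (side e) (act (s', t') p)))
        = (if list_all (good e) p then side e s' else hd (pb (good e) (side e) p))"
    proof (cases "p = []")
      case True
      then show ?thesis using ne sadj by auto
    next
      case pne: False
      show ?thesis
      proof (cases "list_all (good e) p")
        case gp: True
        show ?thesis
        proof (cases "list_all (good e) (act (s', t') p)")
          case True then show ?thesis using gp ne sadj by auto
        next
          case False
          have gne: "(s', t') \<noteq> e" using ne gp by auto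
          have "act (s', t') p \<noteq> p" using False gp by auto
          then have h: "hd p = s' \<or> hd p = t'" using act_ne by metis
          have hg: "good e (hd p)" using gp pne by (cases p) auto
          have "hd (pb (good e) (side e) p) = hd p" using pb_id[OF sid gp] by simp
          moreover have "side e s' = hd p" using h hg sid sadj[OF gne] by metis
          ultimately show ?thesis using False gp IH by simp
        qed
      next
        case gp: False
        show ?thesis
        proof (cases "list_all (good e) (act (s', t') p)")
          case False then show ?thesis using gp IH by simp
        next
          case True
          have gne: "(s', t') \<noteq> e" using ge True gp by auto
          have "act (s', t') p \<noteq> p" using True gp by auto
          then have h: "hd (act (s', t') p) = s' \<or> hd (act (s', t') p) = t'"
            using act_ne[of s' t' p] by blast
          have qn: "act (s', t') p \<noteq> []" using pne by (metis act_length length_0_conv)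
          have hg: "good e (hd (act (s', t') p))" using True qn by (cases "act (s', t') p") auto
          have "hd (pb (good e) (side e) p) = hd (act (s', t') p)"
            using IH[symmetric] pb_id[OF sid True] by simp
          moreover have "side e t' = hd (act (s', t') p)" using h hg sid sadj[OF gne] by metis
          ultimately show ?thesis using True gp by simp
        qed
      qed
    qed
    show ?thesis using True IH hd_eq by simp
  next
    case False
    show ?thesis
    proof (cases "a = t'")
      case True
      have hd_eq: "(if list_all (good e) p then side e s' else hd (pb (good e) (side e) p))
          = (if list_all (good e) p then side e t' else hd (pb (good e) (side e) p))"
      proof (cases "list_all (good e) p")
        case True
        have "(s', t') \<noteq> e" using Cons.prems True \<open>a = t'\<close> by (auto simp: good_def list_all_iff)
        then show ?thesis using sadj by simp
      qed simp
      show ?thesis using True False st hd_eq by simp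
    next
      case False2: False
      then show ?thesis using False by simp
    qed
  qed
qed

definition Cyc :: "nat \<Rightarrow> (('v \<times> 'v) \<times> 'v list) set" where
  "Cyc n = {(e, z). e \<in> E \<and> length z < n \<and> set z \<subseteq> V \<and> (z = [] \<or> \<not> good e (hd z))}"

definition Pp :: "nat \<Rightarrow> ('v \<times> 'v) \<times> 'v list \<Rightarrow> 'v list \<Rightarrow> 'v list" where
  "Pp n c w = (let e = fst c; z = snd c; j = n - length z in
     if drop j w = z then pb (good e) (side e) (take j w) else replicate j (side e (hd z)))"

lemma Pp_act:
  assumes c: "(e, z) \<in> Cyc n" and u: "u \<in> words V n" and g: "g \<in> E"
    and exc: "\<not> (g = e \<and> drop (n - length z) u = z \<and> list_all (good e) (take (n - length z) u))"
  shows "Pp n (e, z) (act g u) = Pp n (e, z) u"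
proof -
  obtain s' t' where gst: "g = (s', t')" by (cases g)
  define j where "j = n - length z"
  define p where "p = take j u"
  define q where "q = drop j u"
  have e: "e \<in> E" and zl: "length z < n" and zh: "z = [] \<or> \<not> good e (hd z)"
    using c by (auto simp: Cyc_def)
  have lu: "length u = n" using u by (simp add: words_def)
  have up: "u = p @ q" by (simp add: p_def q_def)
  have lp: "length p = j" using lu zl by (simp add: p_def j_def)
  have sid: "\<And>x. good e x \<Longrightarrow> side e x = x" using side_id[OF e] by blast
  have sg: "\<And>x. good e (side e x)" using side_good by blast
  have sadj: "(s', t') \<noteq> e \<Longrightarrow> side e s' = side e t'" using side_adj[OF g[unfolded gst] e] by simp
  have PP: "Pp n (e, z) w = (if drop j w = z then pb (good e) (side e) (take j w) else replicate j (side e (hd z)))" for w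
    by (simp add: Pp_def j_def)
  have au: "act g u = act g p @ (if list_all (\<lambda>x. x = s') p then act g q else q)"
    using act_append[of s' t' p q] up gst by simp
  show ?thesis
  proof (cases "\<not> list_all (\<lambda>x. x = s') p \<or> act g q = q")
    case True
    then have au2: "act g u = act g p @ q" using au by auto
    have d: "drop j (act g u) = q" and t: "take j (act g u) = act g p"
      using au2 lp by auto
    show ?thesis
    proof (cases "q = z")
      case True
      have ne: "\<not> ((s', t') = e \<and> list_all (good e) p)" using exc True gst
        by (simp add: j_def p_def q_def)
      show ?thesis unfolding PP d t using True pb_act[OF e g[unfolded gst] ne] gst
        by (simp add: p_def q_def)
    next
      case False
      then show ?thesis unfolding PP d t by (simp add: q_def)
    qed
  next
    case False
    then have ps: "p = replicate j s'" and aq: "act g q \<noteq> q"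
      using lp by (auto simp: list_all_iff intro: replicate_eqI)
    have ap: "act g p = replicate j t'" using ps gst act_replicate by simp
    have au2: "act g u = replicate j t' @ act g q" using au ap ps by (simp add: list_all_iff)
    have d: "drop j (act g u) = act g q" and t: "take j (act g u) = replicate j t'"
      using au2 by auto
    have hq: "q \<noteq> [] \<and> (hd q = s' \<or> hd q = t') \<and> (hd (act g q) = s' \<or> hd (act g q) = t')"
      using act_ne[of s' t' q] aq gst by simp
    have pu: "Pp n (e, z) u = (if q = z then replicate j (side e s') else replicate j (side e (hd z)))"
      unfolding PP using ps pb_replicate[of "good e" "side e", OF sid sg]
      by (simp add: p_def q_def)
    have pau: "Pp n (e, z) (act g u) = (if act g q = z then replicate j (side e t') else replicate j (side e (hd z)))"
      unfolding PP d t using pb_replicate[of "good e" "side e", OF sid sg] by simp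
    show ?thesis
    proof (cases "q = z")
      case True
      then have zne: "z \<noteq> []" and hz: "\<not> good e (hd z)" using hq zh by auto
      have gne: "(s', t') \<noteq> e" using hz hq True by (auto simp: good_def)
      have "side e (hd z) = side e s'" using hq True sadj[OF gne] by auto
      then show ?thesis using pu pau True aq by simp
    next
      case qz: False
      show ?thesis
      proof (cases "act g q = z")
        case True
        have "act g q \<noteq> []" using hq by (metis act_length length_0_conv)
        then have zne: "z \<noteq> []" and hz: "\<not> good e (hd z)" using True zh by auto
        have gne: "(s', t') \<noteq> e" using hz hq True by (auto simp: good_def)
        have "side e (hd z) = side e t'" using hq True sadj[OF gne] by auto
        then show ?thesis using pu pau True qz by simp
      next
        case False
        then show ?thesis using pu pau qz by simp
      qed
    qed
  qed
qed

end


definition cd :: "nat \<Rightarrow> nat \<Rightarrow> nat \<Rightarrow> nat" where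
  "cd L a b = (let d = (if a \<le> b then b - a else a - b) in min d (L - d))"

lemma sc_eq: "b < L \<Longrightarrow> Suc b mod L = (if Suc b = L then 0 else Suc b)"
  by (simp add: mod_Suc)

lemma cd_sym: "cd L a b = cd L b a"
  by (simp add: cd_def Let_def)

lemma cd_self[simp]: "cd L a a = 0"
  by (simp add: cd_def)

lemma cd_zero: "a < L \<Longrightarrow> b < L \<Longrightarrow> cd L a b = 0 \<Longrightarrow> a = b"
  by (auto simp: cd_def Let_def min_def split: if_splits)

lemma cd_sc1: "a < L \<Longrightarrow> b < L \<Longrightarrow> cd L a (Suc b mod L) \<le> cd L a b + 1"
  by (auto simp: sc_eq cd_def Let_def min_def split: if_splits)

lemma cd_sc2: "a < L \<Longrightarrow> b < L \<Longrightarrow> cd L a b \<le> cd L a (Suc b mod L) + 1"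
  by (auto simp: sc_eq cd_def Let_def min_def split: if_splits)

lemma pr_less: assumes "0 < (L::nat)" shows "(a + L - 1) mod L < L" using assms by (rule mod_less_divisor)

lemma pr_eq: assumes a: "a < (L::nat)" shows "(a + L - 1) mod L = (if a = 0 then L - 1 else a - 1)"
proof (cases "a = 0")
  case True
  have "L - 1 < L" using a by arith
  then show ?thesis using True by simp
next
  case False
  have e: "a + L - 1 = (a - 1) + L" using False by arith
  have "(a + L - 1) mod L = (a - 1) mod L" unfolding e by (rule mod_add_self2)
  also have "\<dots> = a - 1" using a by (intro mod_less) arith
  finally show ?thesis using False by simp
qed

lemma sc_pr: assumes "a < L" shows "Suc ((a + L - 1) mod L) mod L = a"
proof (cases "a = 0")
  case True
  have "Suc (L - 1) = L" using assms by simp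
  then show ?thesis using True assms by (simp add: pr_eq)
next
  case False
  have "(a + L - 1) mod L = a - 1" using pr_eq[OF assms] False by simp
  then show ?thesis using False assms by simp
qed

lemma cdlt: "a \<le> b \<Longrightarrow> cd L a b = min (b - a) (L - (b - a))" by (simp add: cd_def)
lemma cdgt: "b \<le> a \<Longrightarrow> cd L a b = min (a - b) (L - (a - b))" by (simp add: cd_def)

lemma cd_desc:
  assumes a: "a < L" and b: "b < L" and ab: "a \<noteq> b"
  shows "cd L (Suc a mod L) b + 1 = cd L a b \<or> cd L ((a + L - 1) mod L) b + 1 = cd L a b"
proof (cases "a < b")
  case True
  show ?thesis
  proof (cases "2 * (b - a) \<le> L")
    case True2: True
    have "Suc a mod L = Suc a" using True b by simp
    moreover have "cd L (Suc a) b = b - Suc a" using True True2 by (simp add: cdlt min_def)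
    moreover have "cd L a b = b - a" using True True2 by (simp add: cdlt min_def)
    moreover have "b - Suc a + 1 = b - a" using True by arith
    ultimately have "cd L (Suc a mod L) b + 1 = cd L a b" by simp
    then show ?thesis by (rule disjI1)
  next
    case False2: False
    have cab: "cd L a b = L - (b - a)" using True False2 by (simp add: cdlt min_def)
    show ?thesis
    proof (cases "a = 0")
      case True3: True
      have "(a + L - 1) mod L = L - 1" using pr_eq[OF a] True3 by simp
      moreover have "cd L (L - 1) b = L - 1 - b" using True3 False2 b by (simp add: cdgt min_def)
      moreover have "L - 1 - b + 1 = L - (b - a)" using b True3 by arith
      ultimately have "cd L ((a + L - 1) mod L) b + 1 = cd L a b" using cab by simp
      then show ?thesis by (rule disjI2)
    next
      case False3: False
      have "(a + L - 1) mod L = a - 1" using pr_eq[OF a] False3 by simp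
      moreover have "cd L (a - 1) b = L - (b - a) - 1" using True False3 False2 b by (simp add: cdlt min_def)
      moreover have "L - (b - a) - 1 + 1 = L - (b - a)" using True b by arith
      ultimately have "cd L ((a + L - 1) mod L) b + 1 = cd L a b" using cab by simp
      then show ?thesis by (rule disjI2)
    qed
  qed
next
  case False
  then have ba: "b < a" using ab by simp
  show ?thesis
  proof (cases "2 * (a - b) \<le> L")
    case True2: True
    have "(a + L - 1) mod L = a - 1" using pr_eq[OF a] ba by simp
    moreover have "cd L (a - 1) b = a - b - 1" using ba True2 by (simp add: cdgt min_def)
    moreover have "cd L a b = a - b" using ba True2 by (simp add: cdgt min_def)
    moreover have "a - b - 1 + 1 = a - b" using ba by arith
    ultimately have "cd L ((a + L - 1) mod L) b + 1 = cd L a b" by simp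
    then show ?thesis by (rule disjI2)
  next
    case False2: False
    have cab: "cd L a b = L - (a - b)" using ba False2 by (simp add: cdgt min_def)
    show ?thesis
    proof (cases "Suc a = L")
      case True3: True
      have "Suc a mod L = 0" using True3 by simp
      moreover have "cd L 0 b = b" using True3 False2 b by (simp add: cdlt min_def)
      moreover have "b + 1 = L - (a - b)" using True3 ba by arith
      ultimately have "cd L (Suc a mod L) b + 1 = cd L a b" using cab by simp
      then show ?thesis by (rule disjI1)
    next
      case False3: False
      have "Suc a mod L = Suc a" using a False3 by simp
      moreover have "cd L (Suc a) b = L - (a - b) - 1" using ba False3 False2 a by (simp add: cdgt min_def)
      moreover have "L - (a - b) - 1 + 1 = L - (a - b)" using ba a by arith
      ultimately have "cd L (Suc a mod L) b + 1 = cd L a b" using cab by simp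
      then show ?thesis by (rule disjI1)
    qed
  qed
qed

lemma mod_small_add: assumes "x < (L::nat)" "k < L" shows "(x + k) mod L = (if x + k < L then x + k else x + k - L)"
proof (cases "x + k < L")
  case False
  then have "(x + k) mod L = (x + k - L) mod L" by (simp add: le_mod_geq)
  moreover have "x + k - L < L" using assms by simp
  ultimately show ?thesis using False by simp
qed simp

lemma cd_rot:
  assumes x: "x < L" and y: "y < L" and k: "k < L"
  shows "cd L ((x + k) mod L) ((y + k) mod L) = cd L x y"
proof -
  have cs: "cd L a b = cd L b a" for a b by (simp add: cd_def Let_def)
  have w: "cd L x y = cd L (x + k - L) (y + k - L)" if "L \<le> x + k" "L \<le> y + k"
  proof (cases "x \<le> y")
    case True then show ?thesis using that by (simp add: cdlt)
  next
    case False then show ?thesis using that by (simp add: cdgt)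
  qed
  have m: "cd L x y = cd L (x + k) (y + k - L)" if "x + k < L" "L \<le> y + k"
  proof -
    have xy: "x < y" using that by linarith
    have "cd L x y = min (y - x) (L - (y - x))" using xy by (simp add: cdlt)
    moreover have "cd L (x + k) (y + k - L) = min (L - (y - x)) (L - (L - (y - x)))"
      using that xy y by (simp add: cdgt)
    moreover have "L - (L - (y - x)) = y - x" using xy y by simp
    ultimately show ?thesis by (simp add: min.commute)
  qed
  show ?thesis
  proof (cases "x + k < L")
    case True
    show ?thesis
    proof (cases "y + k < L")
      case True2: True
      show ?thesis using True True2 by (cases "x \<le> y") (simp_all add: cdlt cdgt)
    next
      case False
      have Y: "(y + k) mod L = y + k - L" using False y k by (simp add: le_mod_geq)
      then show ?thesis using True False m by simp
    qed
  next
    case False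
    have X: "(x + k) mod L = x + k - L" using False x k by (simp add: le_mod_geq)
    show ?thesis
    proof (cases "y + k < L")
      case True2: True
      have "cd L y x = cd L (y + k) (x + k - L)"
      proof -
        have yx: "y < x" using False True2 by linarith
        have "cd L y x = min (x - y) (L - (x - y))" using yx by (simp add: cdlt)
        moreover have "cd L (y + k) (x + k - L) = min (L - (x - y)) (L - (L - (x - y)))"
          using False True2 yx x by (simp add: cdgt)
        moreover have "L - (L - (x - y)) = x - y" using yx x by simp
        ultimately show ?thesis by (simp add: min.commute)
      qed
      then show ?thesis using X True2 cs by simp
    next
      case False2: False
      have Y: "(y + k) mod L = y + k - L" using False2 y k by (simp add: le_mod_geq)
      show ?thesis using X Y w False False2 by simp
    qed
  qed
qed

lemma sc_rot: "r < L \<Longrightarrow> k < L \<Longrightarrow> Suc ((r + k) mod L) mod L = (Suc r mod L + k) mod L"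
  by (metis add_Suc mod_Suc_eq mod_add_left_eq)

definition sep :: "nat \<Rightarrow> nat \<Rightarrow> nat \<Rightarrow> nat \<Rightarrow> bool" where
  "sep L a b r \<longleftrightarrow> cd L a r < cd L a (Suc r mod L) \<and> cd L b (Suc r mod L) < cd L b r"

lemma sep_rot:
  assumes "a < L" "b < L" "r < L" "k < L"
  shows "sep L ((a + k) mod L) ((b + k) mod L) ((r + k) mod L) = sep L a b r"
proof -
  have s: "Suc ((r + k) mod L) mod L = (Suc r mod L + k) mod L" using sc_rot assms by blast
  have L: "0 < L" using assms by simp
  have sr: "Suc r mod L < L" using L by simp
  have 1: "cd L ((a + k) mod L) ((r + k) mod L) = cd L a r" using cd_rot assms by blast
  have 2: "cd L ((a + k) mod L) ((Suc r mod L + k) mod L) = cd L a (Suc r mod L)" using cd_rot assms sr by blast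
  have 3: "cd L ((b + k) mod L) ((r + k) mod L) = cd L b r" using cd_rot assms by blast
  have 4: "cd L ((b + k) mod L) ((Suc r mod L + k) mod L) = cd L b (Suc r mod L)" using cd_rot assms sr by blast
  show ?thesis unfolding sep_def s 1 2 3 4 ..
qed

lemma cond1_iff:
  assumes L: "L = 2 * p" and r: "r < L"
  shows "cd L 0 r < cd L 0 (Suc r mod L) \<longleftrightarrow> r < p"
proof (cases "r < p")
  case True
  have "Suc r mod L = Suc r" using True L by simp
  moreover have "cd L 0 r = r" using True L by (simp add: cdlt min_def)
  moreover have "cd L 0 (Suc r) = Suc r" using True L by (simp add: cdlt min_def)
  ultimately show ?thesis using True by simp
next
  case False
  show ?thesis
  proof (cases "Suc r = L")
    case True
    then show ?thesis using False by (simp add: cd_def)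
  next
    case False2: False
    have "Suc r mod L = Suc r" using False2 r by simp
    moreover have "cd L 0 r = L - r"
    proof -
      have "cd L 0 r = min r (L - r)" by (simp add: cdlt)
      also have "\<dots> = L - r" by (rule min_absorb2) (use False L in linarith)
      finally show ?thesis .
    qed
    moreover have "cd L 0 (Suc r) = L - Suc r" using False L r False2 by (simp add: cdlt min_def)
    ultimately show ?thesis using False by simp
  qed
qed

lemma cond2_iff:
  assumes L: "L = 2 * p" and r: "r < p" and b: "b < L"
  shows "cd L b (Suc r mod L) < cd L b r \<longleftrightarrow> r < b \<and> b \<le> r + p"
proof -
  have s: "Suc r mod L = Suc r" using r L by simp
  show ?thesis
  proof (cases "b \<le> r")
    case True
    have "cd L b r = r - b" using True r L by (simp add: cdlt min_def)
    moreover have "cd L b (Suc r) = Suc r - b" using True r L by (simp add: cdlt min_def)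
    ultimately show ?thesis using True s by simp
  next
    case False
    show ?thesis
    proof (cases "b \<le> r + p")
      case True
      have "cd L b r = b - r" using True False r L by (simp add: cdgt min_def)
      moreover have "cd L b (Suc r) = b - Suc r" using True False r L by (simp add: cdgt min_def)
      ultimately show ?thesis using True False s by simp
    next
      case False2: False
      have "cd L b r = L - (b - r)" using False2 False r L b by (simp add: cdgt min_def)
      moreover have "cd L b (Suc r) = L - (b - Suc r)"
      proof -
        have "cd L b (Suc r) = min (b - Suc r) (L - (b - Suc r))" using False2 r by (simp add: cdgt)
        also have "\<dots> = L - (b - Suc r)" by (rule min_absorb2) (use False2 L b in linarith)
        finally show ?thesis .
      qed
      ultimately show ?thesis using False2 False s b by simp
    qed
  qed
qed

lemma sep0_iff:
  assumes L: "L = 2 * p" and b: "b < L" and r: "r < L"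
  shows "sep L 0 b r \<longleftrightarrow> r < p \<and> r < b \<and> b \<le> r + p"
  using cond1_iff[OF L r] cond2_iff[OF L _ b] unfolding sep_def by blast

lemma card_sep0:
  assumes L: "L = 2 * p" and b: "b < L"
  shows "card {r. r < L \<and> sep L 0 b r} = cd L 0 b"
proof -
  have "{r. r < L \<and> sep L 0 b r} = {r. r < p \<and> r < b \<and> b \<le> r + p}"
    using sep0_iff[OF L b] L by auto
  also have "\<dots> = (if b \<le> p then {0..<b} else {b - p..<p})" by auto
  finally have eq: "{r. r < L \<and> sep L 0 b r} = (if b \<le> p then {0..<b} else {b - p..<p})" .
  show ?thesis
  proof (cases "b \<le> p")
    case True
    have "cd L 0 b = b" using True L by (simp add: cdlt min_def)
    then show ?thesis using eq True by simp
  next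
    case False
    have "cd L 0 b = L - b" using False L b by (simp add: cdlt min_def)
    then show ?thesis using eq False L by simp
  qed
qed

lemma card_sep:
  assumes L: "L = 2 * p" "0 < p" and a: "a < L" and b: "b < L"
  shows "card {r. r < L \<and> sep L a b r} = cd L a b"
proof -
  define b' where "b' = (b + (L - a)) mod L"
  have b': "b' < L" using L by (simp add: b'_def)
  have ba: "(b' + a) mod L = b"
    using a b by (simp add: b'_def mod_add_left_eq) 
  have a0: "(0 + a) mod L = a" using a by simp
  have "{r. r < L \<and> sep L a b r} = (\<lambda>r. (r + a) mod L) ` {r. r < L \<and> sep L 0 b' r}"
  proof (rule set_eqI, rule iffI)
    fix r assume r: "r \<in> {r. r < L \<and> sep L a b r}"
    define r' where "r' = (r + (L - a)) mod L"
    have r': "r' < L" using L by (simp add: r'_def)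
    have rr: "(r' + a) mod L = r" using a r by (simp add: r'_def mod_add_left_eq)
    have "sep L 0 b' r'" using sep_rot[of 0 L b' r' a] r' b' a r ba a0 rr by simp
    then show "r \<in> (\<lambda>r. (r + a) mod L) ` {r. r < L \<and> sep L 0 b' r}" using r' rr by force
  next
    fix r assume "r \<in> (\<lambda>r. (r + a) mod L) ` {r. r < L \<and> sep L 0 b' r}"
    then obtain r' where r': "r' < L" "sep L 0 b' r'" and rr: "r = (r' + a) mod L" by blast
    have "sep L a b r" using sep_rot[of 0 L b' r' a] r' b' a ba a0 rr by simp
    then show "r \<in> {r. r < L \<and> sep L a b r}" using rr L by simp
  qed
  moreover have "inj_on (\<lambda>r. (r + a) mod L) {r. r < L \<and> sep L 0 b' r}"
  proof (rule inj_onI)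
    fix x y assume x: "x \<in> {r. r < L \<and> sep L 0 b' r}" and y: "y \<in> {r. r < L \<and> sep L 0 b' r}"
      and eq: "(x + a) mod L = (y + a) mod L"
    have "cd L x y = 0" using cd_rot[of x L y a] x y a eq by simp
    then show "x = y" using cd_zero x y by blast
  qed
  ultimately have "card {r. r < L \<and> sep L a b r} = card {r. r < L \<and> sep L 0 b' r}"
    by (simp add: card_image)
  also have "\<dots> = cd L 0 b'" using card_sep0[OF L(1) b'] .
  also have "\<dots> = cd L ((0 + a) mod L) ((b' + a) mod L)" using cd_rot[of 0 L b' a] L a b' by simp
  also have "\<dots> = cd L a b" using a0 ba by simp
  finally show ?thesis .
qed


context otree
begin

definition jc :: "nat \<Rightarrow> ('v \<times> 'v) \<times> 'v list \<Rightarrow> nat" where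
  "jc n c = n - length (snd c)"

definition ucr :: "nat \<Rightarrow> ('v \<times> 'v) \<times> 'v list \<Rightarrow> nat \<Rightarrow> 'v list" where
  "ucr n c r = enc (fst c) (jc n c) r @ snd c"

definition Pn :: "nat \<Rightarrow> ('v \<times> 'v) \<times> 'v list \<Rightarrow> 'v list \<Rightarrow> nat" where
  "Pn n c w = val (fst c) (Pp n c w)"

lemma Cyc_fin: "finite (Cyc n)"
proof -
  have "Cyc n \<subseteq> E \<times> {z. set z \<subseteq> V \<and> length z \<le> n}" by (auto simp: Cyc_def)
  moreover have "finite (E \<times> {z. set z \<subseteq> V \<and> length z \<le> n})"
    using finE finV finite_lists_length_le by blast
  ultimately show ?thesis by (rule finite_subset)
qed

lemma Pp_jc: "Pp n c w = (if drop (jc n c) w = snd c then pb (good (fst c)) (side (fst c)) (take (jc n c) w)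
  else replicate (jc n c) (side (fst c) (hd (snd c))))"
  by (simp add: Pp_def jc_def Let_def)

lemma Pp_len: "length w = n \<Longrightarrow> length (Pp n c w) = jc n c"
  by (simp add: Pp_def jc_def Let_def)

lemma enc_good2: "list_all (good e) (enc e j r)"
  by (induction j arbitrary: r) (auto simp: good_def)

lemma Pp_good: "list_all (good (fst c)) (Pp n c w)"
proof -
  have "list_all (good (fst c)) (pb (good (fst c)) (side (fst c)) p)" for p
    by (rule pb_good) (rule side_good)
  moreover have "list_all (good (fst c)) (replicate k (side (fst c) x))" for k x
    using side_good by (simp add: list_all_iff)
  ultimately show ?thesis by (simp add: Pp_def Let_def)
qed

lemma Pn_less: "length w = n \<Longrightarrow> Pn n c w < 2 ^ jc n c"
  using val_less Pp_len by (metis Pn_def)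

lemma Cyc_D: assumes "c \<in> Cyc n"
  shows "fst c \<in> E" "length (snd c) < n" "set (snd c) \<subseteq> V" "snd c = [] \<or> \<not> good (fst c) (hd (snd c))"
  using assms by (auto simp: Cyc_def)

lemma jc_pos: "c \<in> Cyc n \<Longrightarrow> 0 < jc n c"
  using Cyc_D(2) by (simp add: jc_def)

lemma ucr_words: assumes c: "c \<in> Cyc n" shows "ucr n c r \<in> words V n"
proof -
  have e: "fst c \<in> E" using Cyc_D(1)[OF c] .
  have "set (enc (fst c) (jc n c) r) \<subseteq> {fst (fst c), snd (fst c)}" by (rule enc_set)
  moreover have "{fst (fst c), snd (fst c)} \<subseteq> V" using E_fst[OF e] E_snd[OF e] by simp
  ultimately have s1: "set (enc (fst c) (jc n c) r) \<subseteq> V" by (rule subset_trans)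
  have l: "length (ucr n c r) = n" using Cyc_D(2)[OF c] by (simp add: ucr_def jc_def)
  have "set (ucr n c r) \<subseteq> V" using s1 Cyc_D(3)[OF c] by (simp add: ucr_def)
  then show ?thesis using l by (simp add: words_def)
qed

lemma Pp_ucr: assumes "c \<in> Cyc n" shows "Pp n c (ucr n c r) = enc (fst c) (jc n c) r"
proof -
  have e: "fst c \<in> E" using Cyc_D(1)[OF assms] .
  have "pb (good (fst c)) (side (fst c)) (enc (fst c) (jc n c) r) = enc (fst c) (jc n c) r"
    by (rule pb_id) (use side_id[OF e] enc_good2[of "fst c"] in auto)
  moreover have "drop (jc n c) (ucr n c r) = snd c" "take (jc n c) (ucr n c r) = enc (fst c) (jc n c) r"
    by (simp_all add: ucr_def)
  ultimately show ?thesis by (simp add: Pp_jc)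
qed

lemma Pn_ucr: assumes "c \<in> Cyc n" "r < 2 ^ jc n c" shows "Pn n c (ucr n c r) = r"
  using Pp_ucr[OF assms(1)] val_enc[OF E_ne[OF Cyc_D(1)[OF assms(1)]] assms(2)] by (simp add: Pn_def)

lemma tw_ucr: assumes "c \<in> Cyc n" shows "takeWhile (good (fst c)) (ucr n c r) = enc (fst c) (jc n c) r"
  unfolding ucr_def by (rule takeWhile_cyc) (use enc_good2[of "fst c"] Cyc_D(4)[OF assms] in auto)

lemma act_ucr: assumes "c \<in> Cyc n" "r < 2 ^ jc n c"
  shows "act (fst c) (ucr n c r) = ucr n c (Suc r mod 2 ^ jc n c)"
proof -
  obtain s t z where c: "c = ((s, t), z)" by (metis prod.collapse)
  have "s \<noteq> t" using E_ne Cyc_D(1)[OF assms(1)] c by fastforce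
  moreover have "z = [] \<or> (hd z \<noteq> s \<and> hd z \<noteq> t)" using Cyc_D(4)[OF assms(1)] c by (auto simp: good_def)
  ultimately show ?thesis using act_enc assms(2) c by (simp add: ucr_def)
qed

lemma Pp_ucr_other:
  assumes c: "c \<in> Cyc n" and c': "c' \<in> Cyc n" and ne: "c' \<noteq> c"
  shows "Pp n c' (act (fst c) (ucr n c r)) = Pp n c' (ucr n c r)"
proof -
  obtain e z where ez: "c = (e, z)" by (cases c)
  obtain e' z' where ez': "c' = (e', z')" by (cases c')
  define u where "u = ucr n c r"
  have uw: "u \<in> words V n" using ucr_words[OF c] by (simp add: u_def)
  have lu: "length u = n" using uw by (simp add: words_def)
  have "\<not> (e = e' \<and> drop (n - length z') u = z' \<and> list_all (good e') (take (n - length z') u))"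
  proof
    assume h: "e = e' \<and> drop (n - length z') u = z' \<and> list_all (good e') (take (n - length z') u)"
    have ud: "u = take (n - length z') u @ z'" using h by (metis append_take_drop_id)
    have "takeWhile (good e) u = take (n - length z') u"
      using takeWhile_cyc[of "good e" "take (n - length z') u" z'] h Cyc_D(4)[OF c'] ez' ud by auto
    moreover have "takeWhile (good e) u = enc e (jc n c) r" using tw_ucr[OF c] ez by (simp add: u_def)
    ultimately have tk: "take (n - length z') u = enc e (jc n c) r" by simp
    have "length (take (n - length z') u) = n - length z'" using lu by simp
    then have jj: "n - length z' = jc n c" using tk by simp
    have "z' = drop (jc n c) u" using h jj by simp
    also have "\<dots> = z" by (simp add: u_def ucr_def ez)
    finally show False using ne ez ez' h by simp
  qed
  then show ?thesis using Pp_act[of e' z' n u e] c' ez' uw Cyc_D(1)[OF c] ez by (simp add: u_def)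
qed

lemma Pn_ucr_other:
  assumes "c \<in> Cyc n" "c' \<in> Cyc n" "c' \<noteq> c"
  shows "Pn n c' (act (fst c) (ucr n c r)) = Pn n c' (ucr n c r)"
  using Pp_ucr_other[OF assms] by (simp add: Pn_def)

lemma ucr_decomp:
  assumes u: "u \<in> words V n" and e: "e \<in> E" and ne: "act e u \<noteq> u"
  shows "(e, dropWhile (good e) u) \<in> Cyc n \<and>
    val e (takeWhile (good e) u) < 2 ^ jc n (e, dropWhile (good e) u) \<and>
    u = ucr n (e, dropWhile (good e) u) (val e (takeWhile (good e) u))"
proof -
  obtain s t where st: "e = (s, t)" by (cases e)
  have lu: "length u = n" and su: "set u \<subseteq> V" using u by (auto simp: words_def)
  have h: "u \<noteq> [] \<and> good e (hd u)" using act_ne[of s t u] ne st by (auto simp: good_def)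
  then obtain x xs where uxs: "u = x # xs" and gx: "good e x" by (cases u) auto
  define tw where "tw = takeWhile (good e) u"
  define dw where "dw = dropWhile (good e) u"
  have tdw: "tw @ dw = u" by (simp add: tw_def dw_def)
  have twne: "tw \<noteq> []" using uxs gx by (simp add: tw_def)
  have ltw: "length tw + length dw = n" using tdw lu by (metis length_append)
  have ldw: "length dw < n" using ltw twne by (cases tw) auto
  have jc: "jc n (e, dw) = length tw" using ltw by (simp add: jc_def)
  have gtw: "list_all (good e) tw" by (auto simp: tw_def list_all_iff dest: set_takeWhileD)
  have hdw: "dw = [] \<or> \<not> good e (hd dw)" using hd_dropWhile by (metis dw_def)
  have sdw: "set dw \<subseteq> V" using su set_dropWhileD by (fastforce simp: dw_def)
  have cyc: "(e, dw) \<in> Cyc n" using e ldw sdw hdw by (simp add: Cyc_def)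
  have "ucr n (e, dw) (val e tw) = u"
    using enc_val[OF gtw] jc tdw by (simp add: ucr_def)
  then show ?thesis using cyc jc val_less[of e tw] by (simp add: tw_def dw_def)
qed

lemma ucr_inj:
  assumes c: "c \<in> Cyc n" and c': "c' \<in> Cyc n" and e: "fst c = fst c'"
    and r: "r < 2 ^ jc n c" and r': "r' < 2 ^ jc n c'" and eq: "ucr n c r = ucr n c' r'"
  shows "c = c' \<and> r = r'"
proof -
  have "enc (fst c) (jc n c) r = takeWhile (good (fst c)) (ucr n c r)" by (rule tw_ucr[OF c, symmetric])
  also have "\<dots> = takeWhile (good (fst c')) (ucr n c' r')" by (simp only: eq e)
  also have "\<dots> = enc (fst c') (jc n c') r'" by (rule tw_ucr[OF c'])
  finally have tw: "enc (fst c) (jc n c) r = enc (fst c') (jc n c') r'" .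
  have "length (enc (fst c) (jc n c) r) = length (enc (fst c') (jc n c') r')" using tw by simp
  then have j: "jc n c = jc n c'" by simp
  have d1: "drop (jc n c) (ucr n c r) = snd c" by (simp add: ucr_def)
  have d2: "drop (jc n c') (ucr n c' r') = snd c'" by (simp add: ucr_def)
  have "snd c = drop (jc n c) (ucr n c r)" using d1 by simp
  also have "\<dots> = drop (jc n c') (ucr n c' r')" by (simp only: eq j)
  finally have "snd c = snd c'" using d2 by simp
  then have cc: "c = c'" using e by (simp add: prod_eq_iff)
  have "r = Pn n c (ucr n c r)" by (rule Pn_ucr[OF c r, symmetric])
  also have "\<dots> = Pn n c (ucr n c' r')" by (simp only: eq)
  also have "\<dots> = Pn n c' (ucr n c' r')" by (simp only: cc)
  also have "\<dots> = r'" by (rule Pn_ucr[OF c' r'])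
  finally have "r = r'" .
  then show ?thesis using cc by simp
qed

lemma ucr_ne:
  assumes c: "c \<in> Cyc n" and r: "r < 2 ^ jc n c"
  shows "act (fst c) (ucr n c r) \<noteq> ucr n c r"
proof
  assume h: "act (fst c) (ucr n c r) = ucr n c r"
  have L2: "2 \<le> (2::nat) ^ jc n c" using jc_pos[OF c]
    by (metis One_nat_def Suc_leI power_increasing_iff power_one_right one_less_numeral_iff semiring_norm(76))
  have s: "Suc r mod 2 ^ jc n c < 2 ^ jc n c" by simp
  have "Suc r mod 2 ^ jc n c = r"
    using Pn_ucr[OF c s] Pn_ucr[OF c r] h act_ucr[OF c r] by simp
  then show False using r L2 by (simp add: sc_eq split: if_splits)
qed

definition D :: "nat \<Rightarrow> 'v list \<Rightarrow> 'v list \<Rightarrow> nat" where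
  "D n w w' = (\<Sum>c\<in>Cyc n. cd (2 ^ jc n c) (Pn n c w) (Pn n c w'))"

lemma D_sym: "D n w w' = D n w' w"
  by (simp add: D_def cd_sym)

lemma D_self[simp]: "D n w w = 0"
  by (simp add: D_def)

lemma D_split:
  assumes c0: "c0 \<in> Cyc n"
  shows "D n w y = cd (2 ^ jc n c0) (Pn n c0 w) (Pn n c0 y) + (\<Sum>c\<in>Cyc n - {c0}. cd (2 ^ jc n c) (Pn n c w) (Pn n c y))"
  unfolding D_def using sum.remove[OF Cyc_fin c0] by blast

lemma D_step:
  assumes c0: "c0 \<in> Cyc n" and r: "r < 2 ^ jc n c0"
  shows "D n w (act (fst c0) (ucr n c0 r)) = D n w (ucr n c0 r)
           + cd (2 ^ jc n c0) (Pn n c0 w) (Suc r mod 2 ^ jc n c0) - cd (2 ^ jc n c0) (Pn n c0 w) r"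
proof -
  define y where "y = ucr n c0 r"
  have rest: "(\<Sum>c\<in>Cyc n - {c0}. cd (2 ^ jc n c) (Pn n c w) (Pn n c (act (fst c0) y)))
      = (\<Sum>c\<in>Cyc n - {c0}. cd (2 ^ jc n c) (Pn n c w) (Pn n c y))"
    by (rule sum.cong) (use Pn_ucr_other[OF c0] in \<open>auto simp: y_def\<close>)
  have p1: "Pn n c0 (act (fst c0) y) = Suc r mod 2 ^ jc n c0"
    using act_ucr[OF c0 r] Pn_ucr[OF c0] by (simp add: y_def)
  have p2: "Pn n c0 y = r" using Pn_ucr[OF c0 r] by (simp add: y_def)
  show ?thesis using D_split[OF c0, of w "act (fst c0) y"] D_split[OF c0, of w y] rest p1 p2
    by (simp add: y_def)
qed

end


lemma diff_last:
  "length xs = length ys \<Longrightarrow> xs \<noteq> ys \<Longrightarrow>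
   \<exists>\<alpha> \<alpha>' \<beta>. xs = \<alpha> @ \<beta> \<and> ys = \<alpha>' @ \<beta> \<and> length \<alpha> = length \<alpha>' \<and> \<alpha> \<noteq> [] \<and> last \<alpha> \<noteq> last \<alpha>'"
proof (induction xs arbitrary: ys rule: rev_induct)
  case Nil then show ?case by simp
next
  case (snoc x xs)
  obtain ys1 y where ys: "ys = ys1 @ [y]" using snoc.prems(1) by (cases ys rule: rev_exhaust) auto
  have l: "length xs = length ys1" using snoc.prems(1) ys by simp
  show ?case
  proof (cases "x = y")
    case False
    then show ?thesis using ys l by (intro exI[of _ "xs @ [x]"] exI[of _ "ys1 @ [y]"] exI[of _ "[]"]) auto
  next
    case True
    then have "xs \<noteq> ys1" using snoc.prems(2) ys by simp
    then obtain \<alpha> \<alpha>' \<beta> where h: "xs = \<alpha> @ \<beta>" "ys1 = \<alpha>' @ \<beta>" "length \<alpha> = length \<alpha>'" "\<alpha> \<noteq> []" "last \<alpha> \<noteq> last \<alpha>'"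
      using snoc.IH[OF l] by blast
    then show ?thesis using ys True by (intro exI[of _ \<alpha>] exI[of _ \<alpha>'] exI[of _ "\<beta> @ [x]"]) auto
  qed
qed

lemma tw_ge: "(\<And>i. i < k \<Longrightarrow> P (xs ! i)) \<Longrightarrow> k \<le> length xs \<Longrightarrow> k \<le> length (takeWhile P xs)"
proof (induction xs arbitrary: k)
  case Nil then show ?case by simp
next
  case (Cons x xs)
  show ?case
  proof (cases k)
    case 0 then show ?thesis by simp
  next
    case (Suc k')
    have "P x" using Cons.prems(1)[of 0] Suc by simp
    moreover have "k' \<le> length (takeWhile P xs)"
      using Cons.IH[of k'] Cons.prems Suc by fastforce
    ultimately show ?thesis using Suc by simp
  qed
qed

lemma tw_le: "k < length xs \<Longrightarrow> \<not> P (xs ! k) \<Longrightarrow> length (takeWhile P xs) \<le> k"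
proof (induction xs arbitrary: k)
  case Nil then show ?case by simp
next
  case (Cons x xs)
  show ?case
  proof (cases k)
    case 0 then show ?thesis using Cons.prems by simp
  next
    case (Suc k')
    then show ?thesis using Cons.IH[of k'] Cons.prems by auto
  qed
qed

lemma last_drop_less: "m < length xs \<Longrightarrow> last (drop m xs) = last xs"
  by (induction xs arbitrary: m) (auto simp: drop_Cons' split: nat.splits)

lemma drop_ne_last:
  assumes "length \<alpha> = length \<alpha>'" "last \<alpha> \<noteq> last \<alpha>'" "m < length \<alpha>"
  shows "drop m (\<alpha> @ \<beta>) \<noteq> drop m (\<alpha>' @ \<beta>)"
proof
  assume "drop m (\<alpha> @ \<beta>) = drop m (\<alpha>' @ \<beta>)"
  then have "drop m \<alpha> = drop m \<alpha>'" using assms by simp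
  then have "last (drop m \<alpha>) = last (drop m \<alpha>')" by simp
  then show False using assms last_drop_less by metis
qed

context otree
begin

lemma pb_core:
  assumes f: "f \<in> E" and l: "length \<alpha> = length \<alpha>'" and ne: "\<alpha> \<noteq> []" and la: "last \<alpha> \<noteq> last \<alpha>'"
    and gd: "list_all (good f) \<delta>"
    and nr: "\<not> good f (last \<alpha>') \<Longrightarrow> \<alpha> \<noteq> replicate (length \<alpha>) (side f (last \<alpha>'))"
  shows "pb (good f) (side f) (\<alpha>' @ \<delta>) \<noteq> \<alpha> @ \<delta>"
proof
  have sid: "\<And>x. good f x \<Longrightarrow> side f x = x" using side_id[OF f] by blast
  assume h: "pb (good f) (side f) (\<alpha>' @ \<delta>) = \<alpha> @ \<delta>"
  then have "pb (good f) (side f) \<alpha>' @ \<delta> = \<alpha> @ \<delta>" using pb_append[OF gd sid] by simp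
  then have e: "pb (good f) (side f) \<alpha>' = \<alpha>" by simp
  have ne': "\<alpha>' \<noteq> []" using ne l by auto
  show False
  proof (cases "good f (last \<alpha>')")
    case True
    then have "last (pb (good f) (side f) \<alpha>') = last \<alpha>'" using pb_last[OF ne' sid] by simp
    then show False using e la by simp
  next
    case False
    then have "pb (good f) (side f) \<alpha>' = replicate (length \<alpha>') (side f (last \<alpha>'))"
      using pb_last[OF ne' sid] by simp
    then show False using e nr[OF False] l by simp
  qed
qed

lemma Pp_tw:
  assumes "length w = n"
  shows "Pp n (f, dropWhile (good f) w) w' =
    (if drop (length (takeWhile (good f) w)) w' = drop (length (takeWhile (good f) w)) w
     then pb (good f) (side f) (take (length (takeWhile (good f) w)) w')
     else replicate (length (takeWhile (good f) w)) (side f (hd (drop (length (takeWhile (good f) w)) w))))"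
proof -
  have tdw: "takeWhile (good f) w @ dropWhile (good f) w = w" by simp
  then have d: "dropWhile (good f) w = drop (length (takeWhile (good f) w)) w"
    by (metis append_eq_conv_conj)
  have "n - length (dropWhile (good f) w) = length (takeWhile (good f) w)"
    using tdw assms by (metis add_diff_cancel_right' length_append)
  then show ?thesis using d by (simp add: Pp_def Let_def)
qed

lemma tw_take: "take (length (takeWhile P w)) w = takeWhile P w"
  by (metis append_eq_conv_conj takeWhile_dropWhile_id)

lemma good_act_ne: "good f x \<Longrightarrow> f \<in> E \<Longrightarrow> act f (x # xs) \<noteq> x # xs"
  using E_ne[of f] by (cases f) (auto simp: good_def)

lemma P3':
  assumes w: "w \<in> words V n" and w': "w' \<in> words V n" and ne: "w \<noteq> w'"
  shows "\<exists>f\<in>E. act f w \<noteq> w \<and> Pp n (f, dropWhile (good f) w) w' \<noteq> takeWhile (good f) w"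
proof -
  have lw: "length w = n" and lw': "length w' = n" and sw: "set w \<subseteq> V" and sw': "set w' \<subseteq> V"
    using w w' by (auto simp: words_def)
  obtain \<alpha> \<alpha>' \<beta> where d: "w = \<alpha> @ \<beta>" "w' = \<alpha>' @ \<beta>" "length \<alpha> = length \<alpha>'" "\<alpha> \<noteq> []" "last \<alpha> \<noteq> last \<alpha>'"
    using diff_last[of w w'] lw lw' ne by auto
  define a where "a = hd \<alpha>"
  obtain xs where wa: "w = a # xs" using d(1,4) by (cases \<alpha>) (auto simp: a_def)
  have aV: "a \<in> V" using sw wa by simp
  have w0: "w ! 0 = a" using wa by simp
  have wi: "w ! i = \<alpha> ! i" if "i < length \<alpha>" for i using d(1) that by (simp add: nth_append)
  have w'i: "w' ! i = \<alpha>' ! i" if "i < length \<alpha>" for i using d(2,3) that by (simp add: nth_append)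
  have aV': "last \<alpha>' \<in> V" using sw' d(2,3,4) by (metis Un_iff last_in_set length_0_conv set_append subsetD)
  define J where "J f = length (takeWhile (good f) w)" for f
  have tJ: "take (J f) w = takeWhile (good f) w" for f by (simp add: J_def tw_take)
  have gJ: "list_all (good f) (take (J f) w)" for f
    unfolding tJ by (auto simp: list_all_iff dest: set_takeWhileD)
  have JL: "J f \<le> n" for f using lw length_takeWhile_le[of "good f" w] by (simp add: J_def)
  have PpJ: "Pp n (f, dropWhile (good f) w) w' =
     (if drop (J f) w' = drop (J f) w then pb (good f) (side f) (take (J f) w')
      else replicate (J f) (side f (hd (drop (J f) w))))" for f
    using Pp_tw[OF lw, of f w'] by (simp add: J_def)
  have ant: "act f w \<noteq> w" if "f \<in> E" "good f a" for f using good_act_ne that wa by simp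
  have geJ: "J f \<ge> length \<alpha>" if "f \<in> E" "\<forall>i<length \<alpha>. good f (\<alpha> ! i)" for f
    unfolding J_def by (rule tw_ge) (use that wi d(1) in auto)
  have dropJ: "drop (J f) w' = drop (J f) w" "take (J f) w' = \<alpha>' @ take (J f - length \<alpha>) \<beta>"
     "take (J f) w = \<alpha> @ take (J f - length \<alpha>) \<beta>" if "J f \<ge> length \<alpha>" for f
    using that d by auto
  have core: "Pp n (f, dropWhile (good f) w) w' \<noteq> takeWhile (good f) w"
    if f: "f \<in> E" and ge: "J f \<ge> length \<alpha>"
      and nr: "\<not> good f (last \<alpha>') \<Longrightarrow> \<alpha> \<noteq> replicate (length \<alpha>) (side f (last \<alpha>'))" for f
  proof -
    have gd: "list_all (good f) (take (J f - length \<alpha>) \<beta>)"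
      using gJ[of f] dropJ(3)[OF ge] by simp
    have "pb (good f) (side f) (\<alpha>' @ take (J f - length \<alpha>) \<beta>) \<noteq> \<alpha> @ take (J f - length \<alpha>) \<beta>"
      by (rule pb_core[OF f d(3) d(4) d(5) gd nr])
    then show ?thesis using PpJ[of f] dropJ[OF ge] tJ[of f] by simp
  qed
  show ?thesis
  proof (cases "\<forall>x\<in>set \<alpha>. x = a")
    case True
    then have ar: "\<alpha> = replicate (length \<alpha>) a" by (simp add: replicate_eqI)
    have la: "last \<alpha> = a" using True d(4) by simp
    have ya: "a \<noteq> last \<alpha>'" using la d(5) by simp
    obtain f c where f: "f \<in> E" "f = (a, c) \<or> f = (c, a)" "side f (last \<alpha>') = c"
      using first_edge[OF aV aV' ya] by blast
    have ca: "c \<noteq> a" using E_ne[OF f(1)] f(2) by auto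
    have ga: "good f a" using f(2) by (auto simp: good_def)
    have "\<forall>i<length \<alpha>. good f (\<alpha> ! i)"
    proof (intro allI impI)
      fix i assume "i < length \<alpha>"
      then have "\<alpha> ! i = a" using True nth_mem by blast
      then show "good f (\<alpha> ! i)" using ga by simp
    qed
    then have ge: "J f \<ge> length \<alpha>" by (rule geJ[OF f(1)])
    have nr: "\<alpha> \<noteq> replicate (length \<alpha>) (side f (last \<alpha>'))"
    proof
      assume "\<alpha> = replicate (length \<alpha>) (side f (last \<alpha>'))"
      then have "hd \<alpha> = c" using f(3) d(4) by (metis hd_replicate length_0_conv)
      then show False using ca a_def by simp
    qed
    show ?thesis using core[OF f(1) ge nr] ant[OF f(1) ga] f(1) by blast
  next
    case False
    define m where "m = length (takeWhile (\<lambda>x. x = a) \<alpha>)"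
    have tne: "takeWhile (\<lambda>x. x = a) \<alpha> \<noteq> \<alpha>" using False by (simp add: takeWhile_eq_all_conv)
    have ml: "m < length \<alpha>"
    proof (rule ccontr)
      assume "\<not> m < length \<alpha>"
      then have "m = length \<alpha>" using length_takeWhile_le[of "\<lambda>x. x = a" \<alpha>] by (simp add: m_def)
      then have "take (length \<alpha>) \<alpha> = takeWhile (\<lambda>x. x = a) \<alpha>" using tw_take[of "\<lambda>x. x = a" \<alpha>] by (simp add: m_def)
      then show False using tne by simp
    qed
    define b where "b = \<alpha> ! m"
    have ba: "b \<noteq> a" using nth_length_takeWhile[OF ml[unfolded m_def]] by (simp add: b_def m_def)
    have am: "\<alpha> ! i = a" if "i < m" for i
    proof -
      have 1: "takeWhile (\<lambda>x. x = a) \<alpha> ! i = \<alpha> ! i" using that by (simp add: m_def takeWhile_nth)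
      have "takeWhile (\<lambda>x. x = a) \<alpha> ! i \<in> set (takeWhile (\<lambda>x. x = a) \<alpha>)" using that by (simp add: m_def)
      then have "takeWhile (\<lambda>x. x = a) \<alpha> ! i = a" by (blast dest: set_takeWhileD)
      then show ?thesis using 1 by simp
    qed
    have a0: "\<alpha> ! 0 = a" using d(4) by (cases \<alpha>) (auto simp: a_def)
    have m1: "0 < m"
    proof (rule ccontr)
      assume "\<not> 0 < m"
      then have "m = 0" by simp
      then have "b = a" using a0 by (simp add: b_def)
      then show False using ba by simp
    qed
    have bV: "b \<in> V" using sw d(1) ml by (auto simp: b_def)
    obtain f c where f: "f \<in> E" "f = (a, c) \<or> f = (c, a)" "side f b = c"
      using first_edge[OF aV bV ba[symmetric]] by blast
    have ca: "c \<noteq> a" using E_ne[OF f(1)] f(2) by auto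
    have ga: "good f a" using f(2) by (auto simp: good_def)
    have ant': "act f w \<noteq> w" using ant[OF f(1) ga] .
    have wm: "w ! m = b" using wi[OF ml] by (simp add: b_def)
    have mlw: "m < length w" using ml d(1) by simp
    have gm: "m \<le> J f" unfolding J_def
    proof (rule tw_ge)
      fix i assume "i < m"
      then show "good f (w ! i)" using am wi ml ga by simp
    next
      show "m \<le> length w" using mlw by simp
    qed
    have twn: "takeWhile (good f) w ! i = w ! i" if "i < J f" for i
      using tJ[of f] that by (metis nth_take)
    show ?thesis
    proof (cases "c = b")
      case False
      have gb: "\<not> good f b" using False ba f(2) by (auto simp: good_def)
      have "J f \<le> m" unfolding J_def by (rule tw_le[OF mlw]) (use gb wm in simp)
      then have Jm: "J f = m" using gm by simp
      have dne: "drop (J f) w' \<noteq> drop (J f) w"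
        using drop_ne_last[OF d(3) d(5) ml, of \<beta>] d(1,2) Jm by metis
      have hb: "hd (drop (J f) w) = b" using Jm mlw wm by (simp add: hd_drop_conv_nth)
      have pp: "Pp n (f, dropWhile (good f) w) w' = replicate m c" using PpJ[of f] dne hb f(3) Jm by simp
      have t0: "takeWhile (good f) w ! 0 = a" using twn[of 0] Jm m1 w0 by simp
      have "Pp n (f, dropWhile (good f) w) w' \<noteq> takeWhile (good f) w"
      proof
        assume "Pp n (f, dropWhile (good f) w) w' = takeWhile (good f) w"
        then have "replicate m c ! 0 = a" using pp t0 by simp
        then show False using m1 ca by simp
      qed
      then show ?thesis using ant' f(1) by blast
    next
      case True
      have gb: "good f b" using True f(2) by (auto simp: good_def)
      have gm1: "Suc m \<le> J f" unfolding J_def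
      proof (rule tw_ge)
        fix i assume i: "i < Suc m"
        show "good f (w ! i)"
        proof (cases "i < m")
          case True then show ?thesis using am wi ml ga by simp
        next
          case False then have "i = m" using i by simp
          then show ?thesis using wm gb by simp
        qed
      next
        show "Suc m \<le> length w" using mlw by simp
      qed
      have tw0: "takeWhile (good f) w ! 0 = a" using twn[of 0] gm1 w0 by simp
      have twm: "takeWhile (good f) w ! m = b" using twn[of m] gm1 wm by simp
      show ?thesis
      proof (cases "drop (J f) w' = drop (J f) w")
        case False
        define x where "x = side f (hd (drop (J f) w))"
        have pp: "Pp n (f, dropWhile (good f) w) w' = replicate (J f) x"
          using PpJ[of f] False by (simp add: x_def)
        have "takeWhile (good f) w \<noteq> replicate (J f) x"
        proof
          assume h: "takeWhile (good f) w = replicate (J f) x"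
          have "a = x" using tw0 h gm1 by simp
          moreover have "b = x" using twm h gm1 by simp
          ultimately show False using ba by simp
        qed
        then have "Pp n (f, dropWhile (good f) w) w' \<noteq> takeWhile (good f) w" using pp by simp
        then show ?thesis using ant' f(1) by blast
      next
        case dq: True
        have ge: "J f \<ge> length \<alpha>"
        proof (rule ccontr)
          assume "\<not> J f \<ge> length \<alpha>"
          then have "J f < length \<alpha>" by simp
          then have "drop (J f) (\<alpha> @ \<beta>) \<noteq> drop (J f) (\<alpha>' @ \<beta>)" by (rule drop_ne_last[OF d(3) d(5)])
          then show False using dq d(1,2) by simp
        qed
        have nr: "\<alpha> \<noteq> replicate (length \<alpha>) x" for x
        proof
          assume h: "\<alpha> = replicate (length \<alpha>) x"
          have "\<alpha> ! 0 = x" using h d(4) by (metis length_greater_0_conv nth_replicate)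
          moreover have "\<alpha> ! m = x" using h ml by (metis nth_replicate)
          ultimately show False using ba b_def a0 by simp
        qed
        have "Pp n (f, dropWhile (good f) w) w' \<noteq> takeWhile (good f) w" by (rule core[OF f(1) ge nr])
        then show ?thesis using ant' f(1) by blast
      qed
    qed
  qed
qed
end


context otree
begin

lemma D_step2:
  assumes c0: "c0 \<in> Cyc n" and r: "r < 2 ^ jc n c0"
  shows "\<exists>R. D n w (act (fst c0) (ucr n c0 r)) = cd (2 ^ jc n c0) (Pn n c0 w) (Suc r mod 2 ^ jc n c0) + R
           \<and> D n w (ucr n c0 r) = cd (2 ^ jc n c0) (Pn n c0 w) r + R"
proof -
  define y where "y = ucr n c0 r"
  have rest: "(\<Sum>c\<in>Cyc n - {c0}. cd (2 ^ jc n c) (Pn n c w) (Pn n c (act (fst c0) y)))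
      = (\<Sum>c\<in>Cyc n - {c0}. cd (2 ^ jc n c) (Pn n c w) (Pn n c y))"
    by (rule sum.cong) (use Pn_ucr_other[OF c0] in \<open>auto simp: y_def\<close>)
  have p1: "Pn n c0 (act (fst c0) y) = Suc r mod 2 ^ jc n c0"
    using act_ucr[OF c0 r] Pn_ucr[OF c0] by (simp add: y_def)
  have p2: "Pn n c0 y = r" using Pn_ucr[OF c0 r] by (simp add: y_def)
  show ?thesis using D_split[OF c0, of w "act (fst c0) y"] D_split[OF c0, of w y] rest p1 p2
    by (simp add: y_def)
qed

lemma words_len: "w \<in> words V n \<Longrightarrow> length w = n" by (simp add: words_def)

lemma D_adj:
  assumes w: "w \<in> words V n" and y: "y \<in> words V n" and e: "e \<in> E"
  shows "D n w (act e y) \<le> D n w y + 1 \<and> D n w y \<le> D n w (act e y) + 1"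
proof (cases "act e y = y")
  case True then show ?thesis by simp
next
  case False
  define c0 where "c0 = (e, dropWhile (good e) y)"
  define r where "r = val e (takeWhile (good e) y)"
  have c0c: "c0 \<in> Cyc n" and r: "r < 2 ^ jc n c0" and yu: "y = ucr n c0 r"
    using ucr_decomp[OF y e False] by (simp_all add: c0_def r_def)
  have fe: "fst c0 = e" by (simp add: c0_def)
  obtain R where R: "D n w (act e y) = cd (2 ^ jc n c0) (Pn n c0 w) (Suc r mod 2 ^ jc n c0) + R"
     "D n w y = cd (2 ^ jc n c0) (Pn n c0 w) r + R"
    using D_step2[OF c0c r, of w] fe yu by auto
  have a: "Pn n c0 w < 2 ^ jc n c0" using Pn_less words_len[OF w] by blast
  show ?thesis using R cd_sc1[OF a r] cd_sc2[OF a r] by simp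
qed

lemma act_words: "u \<in> words V n \<Longrightarrow> e \<in> E \<Longrightarrow> act e u \<in> words V n"
  using act_set[of u V e] E_fst E_snd by (simp add: words_def)

lemma D_adj_le:
  assumes w: "w \<in> words V n" and adj: "(y, y') \<in> sch_adj V E n"
  shows "D n w y' \<le> D n w y + 1"
proof -
  have y: "y \<in> words V n" and y': "y' \<in> words V n" and ex: "\<exists>e\<in>E. y' = act e y \<or> y = act e y'"
    using adj by (auto simp: sch_adj_def)
  then obtain e where e: "e \<in> E" and h: "y' = act e y \<or> y = act e y'" by blast
  show ?thesis
  proof (cases "y' = act e y")
    case True then show ?thesis using D_adj[OF w y e] by simp
  next
    case False then have "y = act e y'" using h by simp
    then show ?thesis using D_adj[OF w y' e] by simp
  qed
qed

lemma D_path: "(w, w') \<in> (sch_adj V E n) ^^ k \<Longrightarrow> w \<in> words V n \<Longrightarrow> D n w w' \<le> k"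
proof (induction k arbitrary: w')
  case 0 then show ?case by simp
next
  case (Suc k)
  from Suc.prems(1) obtain y where y1: "(w, y) \<in> (sch_adj V E n) ^^ k" and y2: "(y, w') \<in> sch_adj V E n"
    by (rule relpow_Suc_E)
  have "D n w y \<le> k" using Suc.IH[OF y1 Suc.prems(2)] .
  moreover have "D n w w' \<le> D n w y + 1" using D_adj_le[OF Suc.prems(2) y2] .
  ultimately show ?case by simp
qed

lemma P3:
  assumes w: "w \<in> words V n" and w': "w' \<in> words V n" and ne: "w \<noteq> w'"
  shows "\<exists>c r. c \<in> Cyc n \<and> r < 2 ^ jc n c \<and> w = ucr n c r \<and> Pn n c w' \<noteq> r"
proof -
  obtain f where f: "f \<in> E" "act f w \<noteq> w" and pp: "Pp n (f, dropWhile (good f) w) w' \<noteq> takeWhile (good f) w"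
    using P3'[OF assms] by blast
  define c where "c = (f, dropWhile (good f) w)"
  define r where "r = val f (takeWhile (good f) w)"
  have cc: "c \<in> Cyc n" and r: "r < 2 ^ jc n c" and wu: "w = ucr n c r"
    using ucr_decomp[OF w f(1) f(2)] by (simp_all add: c_def r_def)
  have ltw: "length (takeWhile (good f) w) = jc n c"
  proof -
    have "length (takeWhile (good f) w) + length (dropWhile (good f) w) = n"
      using words_len[OF w] by (metis length_append takeWhile_dropWhile_id)
    then show ?thesis by (simp add: c_def jc_def)
  qed
  have "Pn n c w' \<noteq> r"
  proof
    assume h: "Pn n c w' = r"
    have g1: "list_all (good f) (Pp n c w')" using Pp_good[of c n w'] by (simp add: c_def)
    have g2: "list_all (good f) (takeWhile (good f) w)" by (auto simp: list_all_iff dest: set_takeWhileD)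
    have l1: "length (Pp n c w') = jc n c" using Pp_len words_len[OF w'] by blast
    have "val f (Pp n c w') = val f (takeWhile (good f) w)" using h by (simp add: Pn_def c_def r_def)
    then have "Pp n c w' = takeWhile (good f) w" using val_inj[OF g1 g2] l1 ltw by simp
    then show False using pp by (simp add: c_def)
  qed
  then show ?thesis using cc r wu by blast
qed

lemma D_pos:
  assumes w: "w \<in> words V n" and w': "w' \<in> words V n" and ne: "w \<noteq> w'"
  shows "0 < D n w w'"
proof -
  obtain c r where c: "c \<in> Cyc n" and r: "r < 2 ^ jc n c" and wu: "w = ucr n c r" and pn: "Pn n c w' \<noteq> r"
    using P3[OF assms] by blast
  have pw: "Pn n c w = r" using Pn_ucr[OF c r] wu by simp
  have b: "Pn n c w' < 2 ^ jc n c" using Pn_less words_len[OF w'] by blast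
  have "cd (2 ^ jc n c) r (Pn n c w') \<noteq> 0" using cd_zero[OF r b] pn by auto
  moreover have "cd (2 ^ jc n c) (Pn n c w) (Pn n c w') \<le> D n w w'"
    unfolding D_def by (rule member_le_sum) (use c Cyc_fin in auto)
  ultimately show ?thesis using pw by simp
qed

lemma descent:
  assumes w: "w \<in> words V n" and w': "w' \<in> words V n" and ne: "w \<noteq> w'"
  shows "\<exists>w''. (w, w'') \<in> sch_adj V E n \<and> w'' \<in> words V n \<and> D n w'' w' + 1 = D n w w'"
proof -
  obtain c r where c: "c \<in> Cyc n" and r: "r < 2 ^ jc n c" and wu: "w = ucr n c r" and pn: "Pn n c w' \<noteq> r"
    using P3[OF assms] by blast
  define L where "L = (2::nat) ^ jc n c"
  define b where "b = Pn n c w'"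
  have b: "b < L" using Pn_less words_len[OF w'] by (simp add: b_def L_def)
  have rL: "r < L" using r by (simp add: L_def)
  have e: "fst c \<in> E" using Cyc_D(1)[OF c] .
  have L0: "0 < L" by (simp add: L_def)
  consider (s) "cd L (Suc r mod L) b + 1 = cd L r b" | (p) "cd L ((r + L - 1) mod L) b + 1 = cd L r b"
    using cd_desc[OF rL b] pn b_def by auto
  then show ?thesis
  proof cases
    case s
    define w'' where "w'' = act (fst c) w"
    obtain R where R: "D n w' (act (fst c) (ucr n c r)) = cd L b (Suc r mod L) + R"
       "D n w' (ucr n c r) = cd L b r + R"
      using D_step2[OF c r, of w'] by (auto simp: L_def b_def)
    have "D n w'' w' + 1 = D n w w'"
      using R s D_sym[of n w'' w'] D_sym[of n w w'] cd_sym[of L b] wu by (simp add: w''_def)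
    moreover have "w'' \<in> words V n" using act_words[OF w e] by (simp add: w''_def)
    moreover have "(w, w'') \<in> sch_adj V E n" using w e \<open>w'' \<in> words V n\<close> by (auto simp: sch_adj_def w''_def)
    ultimately show ?thesis by blast
  next
    case p
    define q where "q = (r + L - 1) mod L"
    have q: "q < 2 ^ jc n c" using L0 by (simp add: q_def L_def)
    have sq: "Suc q mod L = r" using sc_pr[OF rL] by (simp add: q_def)
    define w'' where "w'' = ucr n c q"
    have aw: "act (fst c) w'' = w" using act_ucr[OF c q] sq wu by (simp add: w''_def L_def)
    obtain R where R: "D n w' (act (fst c) (ucr n c q)) = cd L b (Suc q mod L) + R"
       "D n w' (ucr n c q) = cd L b q + R"
      using D_step2[OF c q, of w'] by (auto simp: L_def b_def)
    have "D n w'' w' + 1 = D n w w'"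
      using R p sq aw D_sym[of n w'' w'] D_sym[of n w w'] cd_sym[of L b] by (simp add: w''_def q_def)
    moreover have ww: "w'' \<in> words V n" using ucr_words[OF c] by (simp add: w''_def)
    moreover have "(w, w'') \<in> sch_adj V E n" using w e ww aw by (auto simp: sch_adj_def)
    ultimately show ?thesis by blast
  qed
qed

lemma path_D: "w \<in> words V n \<Longrightarrow> w' \<in> words V n \<Longrightarrow> D n w w' = k \<Longrightarrow> (w, w') \<in> (sch_adj V E n) ^^ k"
proof (induction k arbitrary: w)
  case 0
  then have "w = w'" using D_pos by fastforce
  then show ?case by simp
next
  case (Suc k)
  then have "w \<noteq> w'" by auto
  then obtain w'' where h: "(w, w'') \<in> sch_adj V E n" "w'' \<in> words V n" "D n w'' w' + 1 = D n w w'"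
    using descent[OF Suc.prems(1,2)] by blast
  have p: "(w'', w') \<in> (sch_adj V E n) ^^ k" using Suc.IH[OF h(2) Suc.prems(2)] h(3) Suc.prems(3) by simp
  show ?case by (rule relpow_Suc_I2[OF h(1) p])
qed

lemma dist_D:
  assumes "w \<in> words V n" "w' \<in> words V n"
  shows "sch_dist V E n w w' = D n w w'"
  unfolding sch_dist_def
proof (rule Least_equality)
  show "(w, w') \<in> sch_adj V E n ^^ D n w w'" using path_D[OF assms refl] .
next
  fix k assume "(w, w') \<in> sch_adj V E n ^^ k"
  then show "D n w w' \<le> k" using D_path assms(1) by blast
qed

end


context otree
begin

lemma words_fin: "finite (words V n)"
proof -
  have "words V n \<subseteq> {xs. set xs \<subseteq> V \<and> length xs \<le> n}" by (auto simp: words_def)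
  moreover have "finite {xs. set xs \<subseteq> V \<and> length xs \<le> n}" using finV finite_lists_length_le by blast
  ultimately show ?thesis by (rule finite_subset)
qed

lemma szeged_reindex:
  "szeged V E n = (\<Sum>c\<in>Cyc n. \<Sum>r<2 ^ jc n c.
      real (n_closer V E n (ucr n c r) (act (fst c) (ucr n c r)) * n_closer V E n (act (fst c) (ucr n c r)) (ucr n c r)))"
proof -
  define S where "S = {(u, e). u \<in> words V n \<and> e \<in> E \<and> act e u \<noteq> u}"
  define g where "g = (\<lambda>(u, e). real (n_closer V E n u (act e u) * n_closer V E n (act e u) u))"
  define h where "h = (\<lambda>(c, r::nat). (ucr n c r, fst c))"
  define Sg where "Sg = (SIGMA c:Cyc n. {..<(2::nat) ^ jc n c})"
  have inj: "inj_on h Sg"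
  proof (rule inj_onI)
    fix x y assume x: "x \<in> Sg" and y: "y \<in> Sg" and eq: "h x = h y"
    obtain c r where cr: "x = (c, r)" by (cases x)
    obtain c' r' where cr': "y = (c', r')" by (cases y)
    have c: "c \<in> Cyc n" and r: "r < 2 ^ jc n c" using x cr by (auto simp: Sg_def)
    have c': "c' \<in> Cyc n" and r': "r' < 2 ^ jc n c'" using y cr' by (auto simp: Sg_def)
    have e1: "ucr n c r = ucr n c' r'" and e2: "fst c = fst c'" using eq cr cr' by (simp_all add: h_def)
    have "c = c' \<and> r = r'" by (rule ucr_inj[OF c c' e2 r r' e1])
    then show "x = y" using cr cr' by simp
  qed
  have img: "h ` Sg = S"
  proof
    show "h ` Sg \<subseteq> S"
    proof
      fix z assume "z \<in> h ` Sg"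
      then obtain c r where c: "c \<in> Cyc n" and r: "r < 2 ^ jc n c" and z: "z = (ucr n c r, fst c)"
        by (auto simp: Sg_def h_def)
      then show "z \<in> S" using ucr_words[OF c] Cyc_D(1)[OF c] ucr_ne[OF c r] by (simp add: S_def)
    qed
  next
    show "S \<subseteq> h ` Sg"
    proof
      fix z assume "z \<in> S"
      then obtain u e where z: "z = (u, e)" and u: "u \<in> words V n" and e: "e \<in> E" and ne: "act e u \<noteq> u"
        by (auto simp: S_def)
      define c where "c = (e, dropWhile (good e) u)"
      define r where "r = val e (takeWhile (good e) u)"
      have "c \<in> Cyc n" "r < 2 ^ jc n c" "u = ucr n c r"
        using ucr_decomp[OF u e ne] by (simp_all add: c_def r_def)
      moreover have "fst c = e" by (simp add: c_def)
      ultimately have "(c, r) \<in> Sg" "h (c, r) = z" using z by (auto simp: Sg_def h_def)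
      then show "z \<in> h ` Sg" by (metis image_eqI)
    qed
  qed
  have "szeged V E n = sum g S" by (simp add: szeged_def S_def g_def)
  also have "\<dots> = sum (g \<circ> h) Sg" using sum.reindex[OF inj] img by simp
  also have "\<dots> = (\<Sum>(c, r)\<in>Sg. (g \<circ> h) (c, r))" by (simp only: case_prod_eta)
  also have "\<dots> = (\<Sum>c\<in>Cyc n. \<Sum>r<2 ^ jc n c. (g \<circ> h) (c, r))"
    unfolding Sg_def by (rule sum.Sigma[OF Cyc_fin, symmetric]) simp
  finally show ?thesis by (simp add: g_def h_def)
qed

lemma nc_eq:
  assumes c: "c \<in> Cyc n" and r: "r < 2 ^ jc n c"
  shows "n_closer V E n (ucr n c r) (act (fst c) (ucr n c r)) =
           card {x \<in> words V n. cd (2 ^ jc n c) (Pn n c x) r < cd (2 ^ jc n c) (Pn n c x) (Suc r mod 2 ^ jc n c)}"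
    and "n_closer V E n (act (fst c) (ucr n c r)) (ucr n c r) =
           card {x \<in> words V n. cd (2 ^ jc n c) (Pn n c x) (Suc r mod 2 ^ jc n c) < cd (2 ^ jc n c) (Pn n c x) r}"
proof -
  define u where "u = ucr n c r"
  define v where "v = act (fst c) u"
  have u: "u \<in> words V n" using ucr_words[OF c] by (simp add: u_def)
  have v: "v \<in> words V n" using act_words[OF u Cyc_D(1)[OF c]] by (simp add: v_def)
  have key: "(sch_dist V E n x u < sch_dist V E n x v \<longleftrightarrow>
               cd (2 ^ jc n c) (Pn n c x) r < cd (2 ^ jc n c) (Pn n c x) (Suc r mod 2 ^ jc n c)) \<and>
             (sch_dist V E n x v < sch_dist V E n x u \<longleftrightarrow>
               cd (2 ^ jc n c) (Pn n c x) (Suc r mod 2 ^ jc n c) < cd (2 ^ jc n c) (Pn n c x) r)"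
    if x: "x \<in> words V n" for x
  proof -
    obtain R where R: "D n x (act (fst c) (ucr n c r)) = cd (2 ^ jc n c) (Pn n c x) (Suc r mod 2 ^ jc n c) + R"
       "D n x (ucr n c r) = cd (2 ^ jc n c) (Pn n c x) r + R"
      using D_step2[OF c r, of x] by blast
    show ?thesis using R dist_D[OF x u] dist_D[OF x v] by (simp add: u_def v_def)
  qed
  show "n_closer V E n (ucr n c r) (act (fst c) (ucr n c r)) =
           card {x \<in> words V n. cd (2 ^ jc n c) (Pn n c x) r < cd (2 ^ jc n c) (Pn n c x) (Suc r mod 2 ^ jc n c)}"
    unfolding n_closer_def u_def[symmetric] v_def[symmetric]
    by (intro arg_cong[where f = card] Collect_cong conj_cong refl) (use key in blast)
  show "n_closer V E n (act (fst c) (ucr n c r)) (ucr n c r) =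
           card {x \<in> words V n. cd (2 ^ jc n c) (Pn n c x) (Suc r mod 2 ^ jc n c) < cd (2 ^ jc n c) (Pn n c x) r}"
    unfolding n_closer_def u_def[symmetric] v_def[symmetric]
    by (intro arg_cong[where f = card] Collect_cong conj_cong refl) (use key in blast)
qed

lemma card_filter_sum: "finite A \<Longrightarrow> card {x \<in> A. P x} = (\<Sum>x\<in>A. if P x then 1 else 0 :: nat)"
  by (simp add: sum.If_cases Int_def)

lemma prod_cards:
  assumes c: "c \<in> Cyc n" and r: "r < 2 ^ jc n c"
  shows "n_closer V E n (ucr n c r) (act (fst c) (ucr n c r)) * n_closer V E n (act (fst c) (ucr n c r)) (ucr n c r)
    = (\<Sum>x\<in>words V n. \<Sum>y\<in>words V n. if sep (2 ^ jc n c) (Pn n c x) (Pn n c y) r then 1 else 0)"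
proof -
  define L where "L = (2::nat) ^ jc n c"
  have "n_closer V E n (ucr n c r) (act (fst c) (ucr n c r)) * n_closer V E n (act (fst c) (ucr n c r)) (ucr n c r)
     = (\<Sum>x\<in>words V n. if cd L (Pn n c x) r < cd L (Pn n c x) (Suc r mod L) then 1 else 0)
       * (\<Sum>y\<in>words V n. if cd L (Pn n c y) (Suc r mod L) < cd L (Pn n c y) r then 1 else 0)"
    unfolding nc_eq[OF c r] L_def[symmetric] by (simp only: card_filter_sum[OF words_fin])
  also have "\<dots> = (\<Sum>x\<in>words V n. \<Sum>y\<in>words V n.
      (if cd L (Pn n c x) r < cd L (Pn n c x) (Suc r mod L) then 1 else 0) *
      (if cd L (Pn n c y) (Suc r mod L) < cd L (Pn n c y) r then 1 else 0))"
    by (rule sum_product)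
  also have "\<dots> = (\<Sum>x\<in>words V n. \<Sum>y\<in>words V n. if sep L (Pn n c x) (Pn n c y) r then 1 else 0)"
    by (rule sum.cong[OF refl], rule sum.cong[OF refl]) (simp add: sep_def)
  finally show ?thesis by (simp add: L_def)
qed

lemma cyc_sum:
  assumes c: "c \<in> Cyc n" and x: "x \<in> words V n" and y: "y \<in> words V n"
  shows "(\<Sum>r<2 ^ jc n c. (if sep (2 ^ jc n c) (Pn n c x) (Pn n c y) r then 1 else 0 :: nat))
     = cd (2 ^ jc n c) (Pn n c x) (Pn n c y)"
proof -
  define L where "L = (2::nat) ^ jc n c"
  obtain j where j: "jc n c = Suc j" using jc_pos[OF c] by (metis Suc_pred)
  have L2: "L = 2 * 2 ^ j" by (simp add: L_def j)
  have a: "Pn n c x < L" using Pn_less words_len[OF x] by (simp add: L_def)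
  have b: "Pn n c y < L" using Pn_less words_len[OF y] by (simp add: L_def)
  have "(\<Sum>r<L. (if sep L (Pn n c x) (Pn n c y) r then 1 else 0 :: nat)) = card {r \<in> {..<L}. sep L (Pn n c x) (Pn n c y) r}"
    by (rule card_filter_sum[symmetric]) simp
  also have "{r \<in> {..<L}. sep L (Pn n c x) (Pn n c y) r} = {r. r < L \<and> sep L (Pn n c x) (Pn n c y) r}" by auto
  also have "card \<dots> = cd L (Pn n c x) (Pn n c y)" by (rule card_sep[OF L2 _ a b]) simp
  finally show ?thesis by (simp add: L_def)
qed

theorem main: "szeged V E n = 2 * wiener V E n"
proof -
  define W where "W = words V n"
  have fW: "finite W" using words_fin by (simp add: W_def)
  define F where "F = (\<lambda>c r x y. if sep (2 ^ jc n c) (Pn n c x) (Pn n c y) r then 1 else (0::nat))"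
  have "szeged V E n = real (\<Sum>c\<in>Cyc n. \<Sum>r<2 ^ jc n c. \<Sum>x\<in>W. \<Sum>y\<in>W. F c r x y)"
    unfolding szeged_reindex of_nat_sum W_def F_def
    by (rule sum.cong[OF refl], rule sum.cong[OF refl]) (simp add: prod_cards)
  also have "(\<Sum>c\<in>Cyc n. \<Sum>r<2 ^ jc n c. \<Sum>x\<in>W. \<Sum>y\<in>W. F c r x y)
      = (\<Sum>x\<in>W. \<Sum>y\<in>W. \<Sum>c\<in>Cyc n. \<Sum>r<2 ^ jc n c. F c r x y)"
  proof -
    have "(\<Sum>c\<in>Cyc n. \<Sum>r<2 ^ jc n c. \<Sum>x\<in>W. \<Sum>y\<in>W. F c r x y)
        = (\<Sum>c\<in>Cyc n. \<Sum>x\<in>W. \<Sum>r<2 ^ jc n c. \<Sum>y\<in>W. F c r x y)"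
      by (rule sum.cong[OF refl], rule sum.swap)
    also have "\<dots> = (\<Sum>x\<in>W. \<Sum>c\<in>Cyc n. \<Sum>r<2 ^ jc n c. \<Sum>y\<in>W. F c r x y)"
      by (rule sum.swap)
    also have "\<dots> = (\<Sum>x\<in>W. \<Sum>c\<in>Cyc n. \<Sum>y\<in>W. \<Sum>r<2 ^ jc n c. F c r x y)"
      by (rule sum.cong[OF refl], rule sum.cong[OF refl], rule sum.swap)
    also have "\<dots> = (\<Sum>x\<in>W. \<Sum>y\<in>W. \<Sum>c\<in>Cyc n. \<Sum>r<2 ^ jc n c. F c r x y)"
      by (rule sum.cong[OF refl], rule sum.swap)
    finally show ?thesis .
  qed
  also have "(\<Sum>x\<in>W. \<Sum>y\<in>W. \<Sum>c\<in>Cyc n. \<Sum>r<2 ^ jc n c. F c r x y) = (\<Sum>x\<in>W. \<Sum>y\<in>W. D n x y)"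
  proof (rule sum.cong[OF refl], rule sum.cong[OF refl])
    fix x y assume x: "x \<in> W" and y: "y \<in> W"
    show "(\<Sum>c\<in>Cyc n. \<Sum>r<2 ^ jc n c. F c r x y) = D n x y"
      unfolding D_def F_def by (rule sum.cong[OF refl]) (use cyc_sum x y in \<open>auto simp: W_def\<close>)
  qed
  also have "(\<Sum>x\<in>W. \<Sum>y\<in>W. D n x y) = (\<Sum>x\<in>W. \<Sum>y\<in>W. sch_dist V E n x y)"
    by (rule sum.cong[OF refl], rule sum.cong[OF refl]) (simp add: dist_D W_def)
  finally have "szeged V E n = real (\<Sum>x\<in>W. \<Sum>y\<in>W. sch_dist V E n x y)" .
  then show ?thesis by (simp add: wiener_def W_def)
qed

end


theorem corollary5p3:
  fixes V :: "'v set" and E :: "('v \<times> 'v) set" and n :: nat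
  assumes "oriented_tree V E" and "n \<ge> 1"
  shows "szeged V E n = 2 * wiener V E n"
proof -
  interpret otree V E by unfold_locales (rule assms(1))
  show ?thesis by (rule main)
qed

end
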